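(* Let $H=(U,(A_1,\dots,A_m))$ be a harmonic set system with $|U|\le m$. Then one of the following holds: (1) $A_1=\cdots=A_m$; (2) $H$ is isomorphic to $([m],(\{1\},\{2\},\dots,\{m\}))$ or to its complement; (3) $m=3$ and $H$ is isomorphic to $([2],(\{1\},\{2\},\{1\}))$ or $([3],(\{1\},\{2\},\{1\}))$ or $([3],(\{1,2\},\{2,3\},\{1,2\}))$; (4) $m=5$ and $H$ is isomorphic to $([5],(\{1,4\},\{2,5\},\{1,3\},\{4,5\},\{1,2\}))$ or to its complement.
   Context: For $I\subseteq[m]$, $H_I=\bigcap_{i\in I}A_i$ ($=U$ if $I=\emptyset$). The run decomposition of a finite set $I$ of positive integers is the partition of sizes, in nonincreasing order, of the maximal runs of consecutive integers in $I$. $H$ is harmonic if $|H_I|=|H_J|$ whenever $I,J\subseteq[m]$ have the same run decomposition. Set systems $(U,(A_1,\dots,A_m))$ and $(V,(B_1,\dots,B_m))$ are isomorphic if there is a bijection $\sigma:U\to V$ with $\sigma(A_i)=B_i$ for all $i$ (the order of the sets is preserved). The complement of $(U,(A_1,\dots,A_m))$ is $(U,(U\setminus A_1,\dots,U\setminus A_m))$. *)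

theory Defs
  imports Main "HOL-Library.Multiset"
begin

text \<open>A set system (U,(A_1,...,A_m)) is represented by a finite ground set U
  and a function A :: nat => 'a set, of which only A 1, ..., A m are relevant.\<close>

definition set_system :: "'a set \<Rightarrow> nat \<Rightarrow> (nat \<Rightarrow> 'a set) \<Rightarrow> bool" where
  "set_system U m A \<longleftrightarrow> finite U \<and> (\<forall>i\<in>{1..m}. A i \<subseteq> U)"

definition HI :: "'a set \<Rightarrow> (nat \<Rightarrow> 'a set) \<Rightarrow> nat set \<Rightarrow> 'a set" where
  "HI U A I = {x \<in> U. \<forall>i\<in>I. x \<in> A i}"

definition max_runs :: "nat set \<Rightarrow> (nat \<times> nat) set" where
  "max_runs I = {(a, b). a \<le> b \<and> {a..b} \<subseteq> I \<and> (a = 0 \<or> a - 1 \<notin> I) \<and> b + 1 \<notin> I}"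

text \<open>Run decomposition: the multiset of the sizes of the maximal runs
  (a partition, i.e. the sizes listed in nonincreasing order).\<close>
definition run_decomp :: "nat set \<Rightarrow> nat multiset" where
  "run_decomp I = image_mset (\<lambda>(a, b). b - a + 1) (mset_set (max_runs I))"

definition harmonic :: "'a set \<Rightarrow> nat \<Rightarrow> (nat \<Rightarrow> 'a set) \<Rightarrow> bool" where
  "harmonic U m A \<longleftrightarrow> (\<forall>I J. I \<subseteq> {1..m} \<longrightarrow> J \<subseteq> {1..m} \<longrightarrow>
       run_decomp I = run_decomp J \<longrightarrow> card (HI U A I) = card (HI U A J))"

definition iso_sys :: "'a set \<Rightarrow> (nat \<Rightarrow> 'a set) \<Rightarrow> 'b set \<Rightarrow> (nat \<Rightarrow> 'b set) \<Rightarrow> nat \<Rightarrow> bool" where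
  "iso_sys U A V B m \<longleftrightarrow> (\<exists>\<sigma>. bij_betw \<sigma> U V \<and> (\<forall>i\<in>{1..m}. \<sigma> ` A i = B i))"

definition compl_sys :: "'a set \<Rightarrow> (nat \<Rightarrow> 'a set) \<Rightarrow> (nat \<Rightarrow> 'a set)" where
  "compl_sys U A = (\<lambda>i. U - A i)"

definition fam :: "'b set list \<Rightarrow> nat \<Rightarrow> 'b set" where
  "fam L i = L ! (i - 1)"

end

theory Submission
  imports Defs
begin

lemma max_runs_sub: "max_runs I \<subseteq> I \<times> I"
  unfolding max_runs_def by auto

lemma finite_max_runs: "finite I \<Longrightarrow> finite (max_runs I)"
  using max_runs_sub finite_cartesian_product finite_subset by metis

lemma max_runs_shift:
  assumes "0 \<notin> I"
  shows "max_runs ((\<lambda>x. x + t) ` I) = (\<lambda>(a,b). (a+t, b+t)) ` max_runs I"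
proof (rule equalityI)
  show "max_runs ((\<lambda>x. x + t) ` I) \<subseteq> (\<lambda>(a,b). (a+t, b+t)) ` max_runs I"
  proof (rule subrelI)
  fix a b assume ab: "(a,b) \<in> max_runs ((\<lambda>x. x + t) ` I)"
  then have h: "a \<le> b" "{a..b} \<subseteq> (\<lambda>x. x + t) ` I" "a = 0 \<or> a - 1 \<notin> (\<lambda>x. x + t) ` I"
      "b + 1 \<notin> (\<lambda>x. x + t) ` I" unfolding max_runs_def by auto
  then have "a \<in> (\<lambda>x. x + t) ` I" by auto
  then obtain a' where a': "a' \<in> I" "a = a' + t" by auto
  with assms have a'1: "a' \<ge> 1" by (cases a') auto
  define b' where "b' = b - t"
  have bb: "b = b' + t" using h(1) a' b'_def by auto
  have "{a'..b'} \<subseteq> I"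
  proof
    fix x assume "x \<in> {a'..b'}"
    then have "x + t \<in> {a..b}" using a' bb by auto
    then have "x + t \<in> (\<lambda>x. x + t) ` I" using h(2) by auto
    then show "x \<in> I" by auto
  qed
  moreover have "a' - 1 \<notin> I"
  proof
    assume "a' - 1 \<in> I"
    then have "a' - 1 + t \<in> (\<lambda>x. x + t) ` I" by auto
    moreover have "a' - 1 + t = a - 1" using a' a'1 by auto
    moreover have "a \<noteq> 0" using a' a'1 by auto
    ultimately show False using h(3) by auto
  qed
  moreover have "b' + 1 \<notin> I"
  proof
    assume "b' + 1 \<in> I"
    then have "b' + 1 + t \<in> (\<lambda>x. x + t) ` I" by auto
    then show False using h(4) bb by (simp add: add.commute add.left_commute)
  qed
  ultimately have "(a', b') \<in> max_runs I" using h(1) a' bb unfolding max_runs_def by auto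
  then show "(a, b) \<in> (\<lambda>(a,b). (a+t, b+t)) ` max_runs I" using a' bb by force
  qed
next
  show "(\<lambda>(a,b). (a+t, b+t)) ` max_runs I \<subseteq> max_runs ((\<lambda>x. x + t) ` I)"
  proof (rule image_subsetI)
  fix p assume p: "p \<in> max_runs I"
  obtain a b where pab: "p = (a,b)" by (cases p)
  have ab: "(a,b) \<in> max_runs I" using p pab by simp
  then have h: "a \<le> b" "{a..b} \<subseteq> I" "a = 0 \<or> a - 1 \<notin> I" "b + 1 \<notin> I"
    unfolding max_runs_def by auto
  have a1: "a \<ge> 1" using h(1,2) assms by (cases a) auto
  have "{a+t..b+t} \<subseteq> (\<lambda>x. x + t) ` I"
  proof
    fix x assume "x \<in> {a+t..b+t}"
    then have "x - t \<in> {a..b}" "x = x - t + t" by auto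
    then show "x \<in> (\<lambda>x. x + t) ` I" using h(2) by blast
  qed
  moreover have "a + t - 1 \<notin> (\<lambda>x. x + t) ` I"
  proof
    assume "a + t - 1 \<in> (\<lambda>x. x + t) ` I"
    then obtain y where "y \<in> I" "a + t - 1 = y + t" by auto
    then have "y = a - 1" using a1 by auto
    then show False using h(3) a1 \<open>y \<in> I\<close> by auto
  qed
  moreover have "b + t + 1 \<notin> (\<lambda>x. x + t) ` I"
  proof
    assume "b + t + 1 \<in> (\<lambda>x. x + t) ` I"
    then obtain y where "y \<in> I" "b + t + 1 = y + t" by auto
    then have "y = b + 1" by auto
    then show False using h(4) \<open>y \<in> I\<close> by auto
  qed
  ultimately have "(a + t, b + t) \<in> max_runs ((\<lambda>x. x + t) ` I)"
    using h(1) unfolding max_runs_def by auto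
  then show "(\<lambda>(a,b). (a+t, b+t)) p \<in> max_runs ((\<lambda>x. x + t) ` I)" using pab by simp
  qed
qed

lemma run_decomp_shift:
  assumes "finite I" "0 \<notin> I"
  shows "run_decomp ((\<lambda>x. x + t) ` I) = run_decomp I"
proof -
  have inj: "inj_on (\<lambda>(a,b). (a+t, b+t)) (max_runs I)" by (auto simp: inj_on_def)
  have "run_decomp ((\<lambda>x. x + t) ` I) =
     image_mset (\<lambda>(a, b). b - a + 1) (mset_set ((\<lambda>(a,b). (a+t, b+t)) ` max_runs I))"
    unfolding run_decomp_def max_runs_shift[OF assms(2)] ..
  also have "\<dots> = image_mset (\<lambda>(a, b). b - a + 1) (image_mset (\<lambda>(a,b). (a+t, b+t)) (mset_set (max_runs I)))"
    using image_mset_mset_set[OF inj] by simp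
  also have "\<dots> = run_decomp I" unfolding run_decomp_def multiset.map_comp
    by (rule multiset.map_cong0) auto
  finally show ?thesis .
qed

definition sep :: "nat set \<Rightarrow> nat set \<Rightarrow> bool" where
  "sep A B \<longleftrightarrow> (\<forall>x\<in>A. \<forall>y\<in>B. x + 1 < y)"

lemma max_runs_union:
  assumes "sep A B"
  shows "max_runs (A \<union> B) = max_runs A \<union> max_runs B"
proof safe
  fix a b assume ab: "(a,b) \<in> max_runs (A \<union> B)" "(a,b) \<notin> max_runs B"
  then have h: "a \<le> b" "{a..b} \<subseteq> A \<union> B" "a = 0 \<or> a - 1 \<notin> A \<union> B" "b + 1 \<notin> A \<union> B"
    unfolding max_runs_def by auto
  have "{a..b} \<subseteq> A \<or> {a..b} \<subseteq> B"
  proof (rule ccontr)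
    assume "\<not> ({a..b} \<subseteq> A \<or> {a..b} \<subseteq> B)"
    then obtain x where x: "x \<in> {a..b}" "x \<notin> A" by blast
    obtain y where y: "y \<in> {a..b}" "y \<notin> B" using \<open>\<not> ({a..b} \<subseteq> A \<or> {a..b} \<subseteq> B)\<close> by blast
    note xy = x y
    then have xB: "x \<in> B" and yA: "y \<in> A" using h(2) by auto
    have "y + 1 < x" using assms yA xB unfolding sep_def by auto
    define S where "S = {z \<in> {a..b}. z \<in> A}"
    have "finite S" "y \<in> S" unfolding S_def using xy yA by auto
    define z where "z = Max S"
    have zS: "z \<in> S" unfolding z_def using \<open>finite S\<close> \<open>y \<in> S\<close> Max_in by blast
    have yz: "y \<le> z" unfolding z_def using \<open>finite S\<close> \<open>y \<in> S\<close> by auto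
    have zA: "z \<in> A" "z \<in> {a..b}" using zS unfolding S_def by auto
    have "z < x" using assms zA(1) xB unfolding sep_def by force
    then have z1: "z + 1 \<in> {a..b}" using zA xy by auto
    have "z + 1 \<notin> S"
    proof
      assume "z + 1 \<in> S"
      then have "z + 1 \<le> Max S" using Max_ge[OF \<open>finite S\<close>] by blast
      then show False using z_def by simp
    qed
    then have "z + 1 \<in> B" using z1 h(2) unfolding S_def by auto
    then show False using assms zA(1) unfolding sep_def by force
  qed
  moreover have "{a..b} \<subseteq> A"
  proof (rule ccontr)
    assume "\<not> {a..b} \<subseteq> A"
    with \<open>{a..b} \<subseteq> A \<or> {a..b} \<subseteq> B\<close> have "{a..b} \<subseteq> B" by auto
    then have "(a,b) \<in> max_runs B" using h unfolding max_runs_def by auto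
    with ab(2) show False by auto
  qed
  ultimately show "(a,b) \<in> max_runs A" using h unfolding max_runs_def by auto
next
  fix a b assume ab: "(a,b) \<in> max_runs A"
  then have h: "a \<le> b" "{a..b} \<subseteq> A" "a = 0 \<or> a - 1 \<notin> A" "b + 1 \<notin> A"
    unfolding max_runs_def by auto
  have "a \<in> A" "b \<in> A" using h(1,2) by auto
  then have "b + 1 \<notin> B" "a = 0 \<or> a - 1 \<notin> B" using assms unfolding sep_def by force+
  then show "(a,b) \<in> max_runs (A \<union> B)" using h unfolding max_runs_def by auto
next
  fix a b assume ab: "(a,b) \<in> max_runs B"
  then have h: "a \<le> b" "{a..b} \<subseteq> B" "a = 0 \<or> a - 1 \<notin> B" "b + 1 \<notin> B"
    unfolding max_runs_def by auto
  have "a \<in> B" "b \<in> B" using h(1,2) by auto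
  then have "b + 1 \<notin> A" "a = 0 \<or> a - 1 \<notin> A" using assms unfolding sep_def by force+
  then show "(a,b) \<in> max_runs (A \<union> B)" using h unfolding max_runs_def by auto
qed

lemma run_decomp_union:
  assumes "finite A" "finite B" "sep A B"
  shows "run_decomp (A \<union> B) = run_decomp A + run_decomp B"
proof -
  have disj: "max_runs A \<inter> max_runs B = {}"
  proof (rule ccontr)
    assume "max_runs A \<inter> max_runs B \<noteq> {}"
    then obtain a b where "(a,b) \<in> max_runs A" "(a,b) \<in> max_runs B" by auto
    then have "a \<in> A" "a \<in> B" using max_runs_sub by auto
    then show False using assms(3) unfolding sep_def by force
  qed
  show ?thesis unfolding run_decomp_def max_runs_union[OF assms(3)]
    using mset_set_Union[OF finite_max_runs[OF assms(1)] finite_max_runs[OF assms(2)] disj]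
    by simp
qed

lemma max_runs_interval:
  assumes "1 \<le> a" "a \<le> b"
  shows "max_runs {a..b} = {(a,b)}"
proof safe
  fix x y assume "(x,y) \<in> max_runs {a..b}"
  then have h: "x \<le> y" "{x..y} \<subseteq> {a..b}" "x = 0 \<or> x - 1 \<notin> {a..b}" "y + 1 \<notin> {a..b}"
    unfolding max_runs_def by auto
  then show "x = a" "y = b" using assms by auto
next
  show "(a,b) \<in> max_runs {a..b}" using assms unfolding max_runs_def by auto
qed

lemma run_decomp_interval:
  assumes "1 \<le> a" "a \<le> b"
  shows "run_decomp {a..b} = {# b - a + 1 #}"
  unfolding run_decomp_def max_runs_interval[OF assms] by simp

lemma run_decomp_single:
  assumes "1 \<le> a"
  shows "run_decomp {a} = {# 1 #}"
  using run_decomp_interval[OF assms order_refl] by simp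

lemma mobius_eq:
  fixes l r :: "'b set \<Rightarrow> nat"
  assumes fin: "finite W"
    and h: "\<And>P. P \<subseteq> W \<Longrightarrow> (\<Sum>Q\<in>{Q. P \<subseteq> Q \<and> Q \<subseteq> W}. l Q) = (\<Sum>Q\<in>{Q. P \<subseteq> Q \<and> Q \<subseteq> W}. r Q)"
  shows "P \<subseteq> W \<Longrightarrow> l P = r P"
proof (induction "card (W - P)" arbitrary: P rule: less_induct)
  case less
  define S where "S = {Q. P \<subseteq> Q \<and> Q \<subseteq> W}"
  have finS: "finite S" unfolding S_def using fin by (auto intro: finite_subset[of _ "Pow W"])
  have PS: "P \<in> S" unfolding S_def using less by auto
  have "(\<Sum>Q\<in>S. l Q) = l P + (\<Sum>Q\<in>S - {P}. l Q)" using sum.remove[OF finS PS] by simp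
  moreover have "(\<Sum>Q\<in>S. r Q) = r P + (\<Sum>Q\<in>S - {P}. r Q)" using sum.remove[OF finS PS] by simp
  moreover have "(\<Sum>Q\<in>S - {P}. l Q) = (\<Sum>Q\<in>S - {P}. r Q)"
  proof (rule sum.cong)
    fix Q assume Q: "Q \<in> S - {P}"
    then have "P \<subset> Q" "Q \<subseteq> W" unfolding S_def by auto
    then have "card (W - Q) < card (W - P)"
      using fin by (intro psubset_card_mono) auto
    then show "l Q = r Q" using less.hyps \<open>Q \<subseteq> W\<close> by blast
  qed simp
  ultimately show ?case using h[OF less.prems] unfolding S_def by simp
qed

lemma exists_pi:
  assumes ss: "set_system U m A" and harm: "harmonic U m A"
  shows "\<exists>\<pi>. bij_betw \<pi> U U \<and> (\<forall>i\<in>{1..<m}. \<pi> ` A i = A (Suc i))"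
proof -
  define W where "W = {1..<m}"
  define tr where "tr x = {i\<in>W. x \<in> A i}" for x
  define trR where "trR x = {i\<in>W. x \<in> A (Suc i)}" for x
  define L where "L P = {x\<in>U. tr x = P}" for P
  define R where "R P = {x\<in>U. trR x = P}" for P
  have finU: "finite U" using ss unfolding set_system_def by auto
  have finW: "finite W" unfolding W_def by auto
  have sumL: "card {x\<in>U. P \<subseteq> tr x} = (\<Sum>Q\<in>{Q. P \<subseteq> Q \<and> Q \<subseteq> W}. card (L Q))" for P
  proof -
    have "{x\<in>U. P \<subseteq> tr x} = (\<Union>Q\<in>{Q. P \<subseteq> Q \<and> Q \<subseteq> W}. L Q)"
      unfolding L_def tr_def by auto
    moreover have "card (\<Union>Q\<in>{Q. P \<subseteq> Q \<and> Q \<subseteq> W}. L Q) = (\<Sum>Q\<in>{Q. P \<subseteq> Q \<and> Q \<subseteq> W}. card (L Q))"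
      by (rule card_UN_disjoint) (use finW finU in \<open>auto simp: L_def intro: finite_subset[of _ "Pow W"]\<close>)
    ultimately show ?thesis by simp
  qed
  have sumR: "card {x\<in>U. P \<subseteq> trR x} = (\<Sum>Q\<in>{Q. P \<subseteq> Q \<and> Q \<subseteq> W}. card (R Q))" for P
  proof -
    have "{x\<in>U. P \<subseteq> trR x} = (\<Union>Q\<in>{Q. P \<subseteq> Q \<and> Q \<subseteq> W}. R Q)"
      unfolding R_def trR_def by auto
    moreover have "card (\<Union>Q\<in>{Q. P \<subseteq> Q \<and> Q \<subseteq> W}. R Q) = (\<Sum>Q\<in>{Q. P \<subseteq> Q \<and> Q \<subseteq> W}. card (R Q))"
      by (rule card_UN_disjoint) (use finW finU in \<open>auto simp: R_def intro: finite_subset[of _ "Pow W"]\<close>)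
    ultimately show ?thesis by simp
  qed
  have eqc: "card {x\<in>U. P \<subseteq> tr x} = card {x\<in>U. P \<subseteq> trR x}" if P: "P \<subseteq> W" for P
  proof -
    have "{x\<in>U. P \<subseteq> tr x} = HI U A P" unfolding HI_def tr_def using P by auto
    moreover have "{x\<in>U. P \<subseteq> trR x} = HI U A ((\<lambda>x. x + 1) ` P)" unfolding HI_def trR_def using P by auto
    moreover have "run_decomp ((\<lambda>x. x + 1) ` P) = run_decomp P"
      by (rule run_decomp_shift) (use P finW in \<open>auto simp: W_def intro: finite_subset\<close>)
    moreover have "P \<subseteq> {1..m}" "(\<lambda>x. x + 1) ` P \<subseteq> {1..m}" using P unfolding W_def by auto
    ultimately show ?thesis using harm unfolding harmonic_def by metis
  qed
  have cardLR: "card (L P) = card (R P)" for P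
  proof (cases "P \<subseteq> W")
    case True
    show ?thesis
      by (rule mobius_eq[OF finW _ True]) (metis eqc sumL sumR)
  next
    case False
    then have "L P = {}" "R P = {}" unfolding L_def R_def tr_def trR_def by auto
    then show ?thesis by simp
  qed
  have "\<forall>P. \<exists>\<beta>. bij_betw \<beta> (L P) (R P)"
  proof
    fix P
    have "finite (L P)" "finite (R P)" unfolding L_def R_def using finU by auto
    then show "\<exists>\<beta>. bij_betw \<beta> (L P) (R P)" using cardLR finite_same_card_bij by blast
  qed
  then obtain \<beta> where \<beta>: "\<And>P. bij_betw (\<beta> P) (L P) (R P)" by metis
  define \<pi> where "\<pi> x = \<beta> (tr x) x" for x
  have \<pi>R: "x \<in> U \<Longrightarrow> \<pi> x \<in> R (tr x)" for x
    unfolding \<pi>_def using \<beta>[of "tr x"] unfolding bij_betw_def L_def by auto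
  have inj: "inj_on \<pi> U"
  proof (rule inj_onI)
    fix x y assume xy: "x \<in> U" "y \<in> U" "\<pi> x = \<pi> y"
    have "trR (\<pi> x) = tr x" using \<pi>R[OF xy(1)] unfolding R_def by auto
    moreover have "trR (\<pi> y) = tr y" using \<pi>R[OF xy(2)] unfolding R_def by auto
    ultimately have "tr x = tr y" using xy(3) by simp
    then have "\<beta> (tr x) x = \<beta> (tr x) y" using xy unfolding \<pi>_def by simp
    moreover have "x \<in> L (tr x)" "y \<in> L (tr x)" using xy \<open>tr x = tr y\<close> unfolding L_def by auto
    ultimately show "x = y" using \<beta>[of "tr x"] unfolding bij_betw_def inj_on_def by blast
  qed
  have surj: "\<pi> ` U = U"
  proof
    show "\<pi> ` U \<subseteq> U" using \<pi>R unfolding R_def by auto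
    show "U \<subseteq> \<pi> ` U"
    proof
      fix y assume y: "y \<in> U"
      then have "y \<in> R (trR y)" unfolding R_def by auto
      then obtain x where x: "x \<in> L (trR y)" "\<beta> (trR y) x = y"
        using \<beta>[of "trR y"] unfolding bij_betw_def by (metis imageE)
      then have "x \<in> U" "tr x = trR y" unfolding L_def by auto
      then have "\<pi> x = y" using x unfolding \<pi>_def by simp
      then show "y \<in> \<pi> ` U" using \<open>x \<in> U\<close> by blast
    qed
  qed
  have bij: "bij_betw \<pi> U U" using inj surj unfolding bij_betw_def by auto
  have key: "x \<in> U \<Longrightarrow> i \<in> W \<Longrightarrow> (x \<in> A i \<longleftrightarrow> \<pi> x \<in> A (Suc i))" for x i
  proof -
    assume "x \<in> U" "i \<in> W"
    then have "trR (\<pi> x) = tr x" using \<pi>R unfolding R_def by auto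
    then show ?thesis using \<open>i \<in> W\<close> unfolding tr_def trR_def by blast
  qed
  have "\<forall>i\<in>{1..<m}. \<pi> ` A i = A (Suc i)"
  proof
    fix i assume i: "i \<in> {1..<m}"
    have AU: "A i \<subseteq> U" "A (Suc i) \<subseteq> U" using ss i unfolding set_system_def by auto
    show "\<pi> ` A i = A (Suc i)"
    proof
      show "\<pi> ` A i \<subseteq> A (Suc i)" using key AU i unfolding W_def by auto
      show "A (Suc i) \<subseteq> \<pi> ` A i"
      proof
        fix y assume y: "y \<in> A (Suc i)"
        then have "y \<in> \<pi> ` U" using AU surj by auto
        then obtain x where "x \<in> U" "y = \<pi> x" by blast
        then show "y \<in> \<pi> ` A i" using key[of x i] y i unfolding W_def by auto
      qed
    qed
  qed
  then show ?thesis using bij by blast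
qed

lemma periodic_iter:
  fixes F :: "nat \<Rightarrow> 'b"
  assumes "\<forall>d. F (d + p) = F d"
  shows "F (d + p * q) = F d"
proof (induction q)
  case 0 then show ?case by simp
next
  case (Suc q)
  have "F (d + p * Suc q) = F ((d + p * q) + p)" by (simp add: algebra_simps)
  also have "\<dots> = F (d + p * q)" using assms by blast
  finally show ?case using Suc by simp
qed

lemma periodic_zero:
  fixes F :: "nat \<Rightarrow> int"
  assumes p: "p > 0" and per: "\<forall>d. F (d + p) = F d"
    and z: "\<forall>d. a \<le> d \<longrightarrow> d < a + p \<longrightarrow> F d = 0"
  shows "F d = 0"
proof -
  have ge: "F e = 0" if "a \<le> e" for e
    using that
  proof (induction e rule: less_induct)
    case (less e)
    show ?case
    proof (cases "e < a + p")
      case True then show ?thesis using z less.prems by blast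
    next
      case False
      then have "F e = F ((e - p) + p)" by simp
      also have "\<dots> = F (e - p)" using per by blast
      also have "\<dots> = 0" using less.IH[of "e - p"] False p by auto
      finally show ?thesis .
    qed
  qed
  have "F d = F (d + p * a)" using periodic_iter[OF per] by simp
  also have "\<dots> = 0" using ge[of "d + p * a"] p by (simp add: add_increasing)
  finally show ?thesis .
qed

lemma shift_sum:
  fixes F :: "nat \<Rightarrow> int"
  shows "(\<Sum>j<p. F (Suc d + j)) = (\<Sum>j<p. F (d + j)) - F d + F (d + p)"
proof -
  have "(\<Sum>j<Suc p. F (d + j)) = F (d + 0) + (\<Sum>j<p. F (d + Suc j))"
    by (rule sum.lessThan_Suc_shift)
  moreover have "(\<Sum>j<Suc p. F (d + j)) = (\<Sum>j<p. F (d + j)) + F (d + p)" by simp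
  ultimately show ?thesis by simp
qed

lemma periodic_fullsum:
  fixes z :: "nat \<Rightarrow> int"
  assumes "\<forall>d. z (d + p) = z d"
  shows "(\<Sum>j<p. z (d + j)) = (\<Sum>j<p. z j)"
proof (induction d)
  case 0 then show ?case by simp
next
  case (Suc d)
  have "(\<Sum>j<p. z (Suc d + j)) = (\<Sum>j<p. z (d + j)) - z d + z (d + p)" by (rule shift_sum)
  then show ?case using Suc assms by simp
qed

lemma rec_lemma:
  fixes z :: "'k \<Rightarrow> nat \<Rightarrow> int" and per :: "'k \<Rightarrow> nat" and c :: int
  assumes "finite K"
  shows "(\<forall>k\<in>K. per k > 0 \<and> (\<forall>d. z k (d + per k) = z k d)) \<Longrightarrow>
    (\<forall>d. a \<le> d \<longrightarrow> d < a + L \<longrightarrow> c + (\<Sum>k\<in>K. z k d) = 0) \<Longrightarrow>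
    1 + (\<Sum>k\<in>K. per k - 1) \<le> L \<Longrightarrow> c + (\<Sum>k\<in>K. z k d) = 0"
  using assms
proof (induction K arbitrary: c z L d rule: finite_induct)
  case empty
  have "a < a + L" using empty.prems(3) by simp
  then have "c + (\<Sum>k\<in>{}. z k a) = 0" using empty.prems(2) by blast
  then show ?case by simp
next
  case (insert k0 K)
  define p where "p = per k0"
  have p0: "p > 0" and perk0: "\<forall>d. z k0 (d + p) = z k0 d" using insert.prems(1) p_def by auto
  define F where "F d = c + (\<Sum>k\<in>insert k0 K. z k d)" for d
  have Fd: "F d = c + z k0 d + (\<Sum>k\<in>K. z k d)" for d
    unfolding F_def using insert.hyps by simp
  define c' where "c' = int p * c + (\<Sum>j<p. z k0 j)"
  define z' where "z' k d = (\<Sum>j<p. z k (d + j))" for k d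
  have L: "1 + (p - 1) + (\<Sum>k\<in>K. per k - 1) \<le> L"
    using insert.prems(3) insert.hyps p_def by simp
  have F2: "c' + (\<Sum>k\<in>K. z' k d) = (\<Sum>j<p. F (d + j))" for d
  proof -
    have "(\<Sum>j<p. F (d + j)) = (\<Sum>j<p. c) + (\<Sum>j<p. z k0 (d + j)) + (\<Sum>j<p. \<Sum>k\<in>K. z k (d + j))"
      unfolding Fd by (simp add: sum.distrib)
    also have "(\<Sum>j<p. z k0 (d + j)) = (\<Sum>j<p. z k0 j)" by (rule periodic_fullsum[OF perk0])
    also have "(\<Sum>j<p. \<Sum>k\<in>K. z k (d + j)) = (\<Sum>k\<in>K. z' k d)"
      unfolding z'_def by (rule sum.swap)
    finally show ?thesis unfolding c'_def by simp
  qed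
  have IH: "c' + (\<Sum>k\<in>K. z' k d) = 0" for d
  proof (rule insert.IH)
    show "\<forall>k\<in>K. 0 < per k \<and> (\<forall>d. z' k (d + per k) = z' k d)"
    proof
      fix k assume k: "k \<in> K"
      then have "0 < per k" "\<forall>d. z k (d + per k) = z k d" using insert.prems(1) by auto
      then show "0 < per k \<and> (\<forall>d. z' k (d + per k) = z' k d)"
      proof (intro conjI allI)
        fix d
        have "z' k (d + per k) = (\<Sum>j<p. z k ((d + j) + per k))" unfolding z'_def
          by (simp add: ac_simps)
        also have "\<dots> = z' k d" unfolding z'_def using \<open>\<forall>d. z k (d + per k) = z k d\<close> by simp
        finally show "z' k (d + per k) = z' k d" .
      qed (simp)
    qed
    show "\<forall>d. a \<le> d \<longrightarrow> d < a + (L - (p - 1)) \<longrightarrow> c' + (\<Sum>k\<in>K. z' k d) = 0"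
    proof (intro allI impI)
      fix d assume d: "a \<le> d" "d < a + (L - (p - 1))"
      have "F (d + j) = 0" if "j < p" for j
        using insert.prems(2) d that L unfolding F_def by auto
      then show "c' + (\<Sum>k\<in>K. z' k d) = 0" unfolding F2 by simp
    qed
    show "1 + (\<Sum>k\<in>K. per k - 1) \<le> L - (p - 1)" using L by simp
  qed
  have Fsum0: "(\<Sum>j<p. F (d + j)) = 0" for d using IH F2 by simp
  have Fper: "\<forall>d. F (d + p) = F d"
  proof
    fix d
    have "(\<Sum>j<p. F (Suc d + j)) = (\<Sum>j<p. F (d + j)) - F d + F (d + p)" by (rule shift_sum)
    then show "F (d + p) = F d" using Fsum0[of d] Fsum0[of "Suc d"] by simp
  qed
  have "F d = 0"
  proof (rule periodic_zero[OF p0 Fper])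
    show "\<forall>d. a \<le> d \<longrightarrow> d < a + p \<longrightarrow> F d = 0"
      using insert.prems(2) L unfolding F_def by auto
  qed
  then show ?case unfolding F_def .
qed

locale perm_sys =
  fixes U :: "'a set" and \<pi> :: "'a \<Rightarrow> 'a"
  assumes finU: "finite U" and bij: "bij_betw \<pi> U U"
begin

lemma pw_bij: "bij_betw (\<pi> ^^ j) U U" using bij_betw_funpow[OF bij] .
lemma pw_in: "y \<in> U \<Longrightarrow> (\<pi> ^^ j) y \<in> U" using pw_bij unfolding bij_betw_def by blast
lemma pw_inj: "inj_on (\<pi> ^^ j) U" using pw_bij unfolding bij_betw_def by blast
lemma pw_add: "(\<pi> ^^ (i + j)) y = (\<pi> ^^ i) ((\<pi> ^^ j) y)" by (simp add: funpow_add)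
lemma pw_comm: "(\<pi> ^^ i) ((\<pi> ^^ j) y) = (\<pi> ^^ j) ((\<pi> ^^ i) y)"
  by (metis pw_add add.commute)
lemma pi_in: "y \<in> U \<Longrightarrow> \<pi> y \<in> U" using bij unfolding bij_betw_def by blast
lemma pi_inj: "inj_on \<pi> U" using bij unfolding bij_betw_def by blast

lemma ex_ret: assumes y: "y \<in> U" shows "\<exists>k>0. (\<pi> ^^ k) y = y"
proof -
  have "\<not> inj_on (\<lambda>j. (\<pi> ^^ j) y) {..card U}"
  proof
    assume inj: "inj_on (\<lambda>j. (\<pi> ^^ j) y) {..card U}"
    have "(\<lambda>j. (\<pi> ^^ j) y) ` {..card U} \<subseteq> U" using pw_in y by auto
    then have "card ((\<lambda>j. (\<pi> ^^ j) y) ` {..card U}) \<le> card U" using finU card_mono by blast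
    moreover have "card ((\<lambda>j. (\<pi> ^^ j) y) ` {..card U}) = Suc (card U)"
      using card_image[OF inj] by simp
    ultimately show False by simp
  qed
  then obtain i j where ij: "i \<le> card U" "j \<le> card U" "i \<noteq> j" "(\<pi> ^^ i) y = (\<pi> ^^ j) y"
    unfolding inj_on_def by auto
  then have "\<exists>i j. i < j \<and> (\<pi> ^^ i) y = (\<pi> ^^ j) y" by (metis linorder_neqE_nat)
  then obtain i j where ij2: "i < j" "(\<pi> ^^ i) y = (\<pi> ^^ j) y" by blast
  have "(\<pi> ^^ i) ((\<pi> ^^ (j - i)) y) = (\<pi> ^^ i) y"
    using ij2 pw_add[of i "j - i" y] by simp
  then have "(\<pi> ^^ (j - i)) y = y" using pw_inj[of i] y pw_in unfolding inj_on_def by blast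
  then show ?thesis using ij2 by (intro exI[of _ "j - i"]) auto
qed

definition per :: "'a \<Rightarrow> nat" where
  "per y = (LEAST k. 0 < k \<and> (\<pi> ^^ k) y = y)"

lemma per_prop: assumes "y \<in> U" shows "0 < per y" "(\<pi> ^^ per y) y = y"
proof -
  obtain k where "0 < k \<and> (\<pi> ^^ k) y = y" using ex_ret[OF assms] by blast
  then have "0 < per y \<and> (\<pi> ^^ per y) y = y" unfolding per_def by (rule LeastI)
  then show "0 < per y" "(\<pi> ^^ per y) y = y" by auto
qed

lemma per_min: "0 < k \<Longrightarrow> k < per y \<Longrightarrow> (\<pi> ^^ k) y \<noteq> y"
  unfolding per_def using not_less_Least by blast

lemma per_ret: "y \<in> U \<Longrightarrow> (\<pi> ^^ (d + per y)) y = (\<pi> ^^ d) y"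
  using pw_add[of d "per y" y] per_prop by simp

lemma per_ret_mult: "y \<in> U \<Longrightarrow> (\<pi> ^^ (d + per y * q)) y = (\<pi> ^^ d) y"
proof (induction q)
  case 0 then show ?case by simp
next
  case (Suc q)
  have "(\<pi> ^^ (d + per y * Suc q)) y = (\<pi> ^^ ((d + per y * q) + per y)) y" by (simp add: algebra_simps)
  also have "\<dots> = (\<pi> ^^ (d + per y * q)) y" using per_ret Suc.prems by blast
  finally show ?case using Suc by simp
qed

lemma per_pw: assumes y: "y \<in> U" shows "per ((\<pi> ^^ j) y) = per y"
proof -
  have "(\<pi> ^^ k) ((\<pi> ^^ j) y) = (\<pi> ^^ j) y \<longleftrightarrow> (\<pi> ^^ k) y = y" for k
  proof -
    have "(\<pi> ^^ k) ((\<pi> ^^ j) y) = (\<pi> ^^ j) ((\<pi> ^^ k) y)" by (rule pw_comm)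
    then show ?thesis using pw_inj[of j] pw_in y unfolding inj_on_def by metis
  qed
  then show ?thesis unfolding per_def by simp
qed

definition orb :: "'a \<Rightarrow> 'a set" where
  "orb y = (\<lambda>j. (\<pi> ^^ j) y) ` {..<per y}"

lemma orb_sub: "y \<in> U \<Longrightarrow> orb y \<subseteq> U" unfolding orb_def using pw_in by auto

lemma orb_inj: assumes y: "y \<in> U" shows "inj_on (\<lambda>j. (\<pi> ^^ j) y) {..<per y}"
proof -
  have "i = j" if ij: "i < per y" "j < per y" "(\<pi> ^^ i) y = (\<pi> ^^ j) y" "i \<le> j" for i j
  proof (rule ccontr)
    assume "i \<noteq> j"
    then have "i < j" using ij by simp
    have "(\<pi> ^^ i) ((\<pi> ^^ (j - i)) y) = (\<pi> ^^ i) y"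
      using ij pw_add[of i "j - i" y] \<open>i < j\<close> by simp
    then have "(\<pi> ^^ (j - i)) y = y" using pw_inj[of i] y pw_in unfolding inj_on_def by blast
    moreover have "j - i < per y" "0 < j - i" using ij \<open>i < j\<close> by auto
    ultimately show False using per_min by blast
  qed
  then show ?thesis unfolding inj_on_def by (metis linorder_le_cases lessThan_iff)
qed

lemma card_orb: "y \<in> U \<Longrightarrow> card (orb y) = per y"
  unfolding orb_def using card_image[OF orb_inj] by simp

lemma orb_per: "y \<in> U \<Longrightarrow> z \<in> orb y \<Longrightarrow> per z = per y"
  unfolding orb_def using per_pw by auto

lemma sum_per_le: "(\<Sum>p\<in>per ` U. p) \<le> card U"
proof -
  define r where "r p = (SOME y. y \<in> U \<and> per y = p)" for p
  have r: "r p \<in> U \<and> per (r p) = p" if "p \<in> per ` U" for p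
    unfolding r_def using that by (metis (mono_tags, lifting) imageE someI_ex)
  have fin: "finite (per ` U)" using finU by simp
  have "card (\<Union>p\<in>per ` U. orb (r p)) = (\<Sum>p\<in>per ` U. card (orb (r p)))"
  proof (rule card_UN_disjoint[OF fin])
    show "\<forall>p\<in>per ` U. finite (orb (r p))" unfolding orb_def by auto
    show "\<forall>p\<in>per ` U. \<forall>q\<in>per ` U. p \<noteq> q \<longrightarrow> orb (r p) \<inter> orb (r q) = {}"
      using r orb_per by (metis disjoint_iff)
  qed
  also have "\<dots> = (\<Sum>p\<in>per ` U. p)" using r card_orb by (intro sum.cong) auto
  finally have eq: "card (\<Union>p\<in>per ` U. orb (r p)) = (\<Sum>p\<in>per ` U. p)" .
  have "(\<Union>p\<in>per ` U. orb (r p)) \<subseteq> U" using r orb_sub by blast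
  then have "card (\<Union>p\<in>per ` U. orb (r p)) \<le> card U" using finU card_mono by blast
  then show ?thesis using eq by simp
qed

end

locale perm_X = perm_sys +
  fixes X :: "'a set"
  assumes XU: "X \<subseteq> U"
begin

definition f :: "nat \<Rightarrow> nat" where
  "f d = card {y\<in>X. (\<pi> ^^ d) y \<notin> X}"

definition zf :: "nat \<Rightarrow> nat \<Rightarrow> nat" where
  "zf p d = card {y\<in>X. per y = p \<and> (\<pi> ^^ d) y \<notin> X}"

lemma finX: "finite X" using finU XU finite_subset by blast

lemma f0: "f 0 = 0" unfolding f_def by simp

lemma f_zero_inv: assumes "f d = 0" shows "(\<pi> ^^ d) ` X = X"
proof -
  have "{y\<in>X. (\<pi> ^^ d) y \<notin> X} = {}" using assms finX unfolding f_def by simp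
  then have "(\<pi> ^^ d) ` X \<subseteq> X" by auto
  moreover have "inj_on (\<pi> ^^ d) X" using pw_inj XU inj_on_subset by blast
  ultimately show ?thesis using endo_inj_surj finX by blast
qed

lemma f_sum: "f d = (\<Sum>p\<in>per ` U. zf p d)"
proof -
  have "{y\<in>X. (\<pi> ^^ d) y \<notin> X} = (\<Union>p\<in>per ` U. {y\<in>X. per y = p \<and> (\<pi> ^^ d) y \<notin> X})"
    using XU by auto
  moreover have "card (\<Union>p\<in>per ` U. {y\<in>X. per y = p \<and> (\<pi> ^^ d) y \<notin> X}) = (\<Sum>p\<in>per ` U. zf p d)"
    unfolding zf_def by (rule card_UN_disjoint) (use finU finX in auto)
  ultimately show ?thesis unfolding f_def by simp
qed

lemma zf_per: "zf p (d + p) = zf p d"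
proof -
  have "{y\<in>X. per y = p \<and> (\<pi> ^^ (d + p)) y \<notin> X} = {y\<in>X. per y = p \<and> (\<pi> ^^ d) y \<notin> X}"
    using per_ret XU by auto
  then show ?thesis unfolding zf_def by simp
qed

lemma zf0: "zf p 0 = 0"
proof -
  have "{y\<in>X. per y = p \<and> (\<pi> ^^ 0) y \<notin> X} = {}" by auto
  then show ?thesis unfolding zf_def by (simp only:) simp
qed

end

context perm_X
begin

lemma D0_inv:
  assumes m4: "4 \<le> m" and pair: "\<forall>d. 2 \<le> d \<longrightarrow> d \<le> m - 1 \<longrightarrow> f d = f 2"
    and d0: "2 \<le> d0" "d0 \<le> m - 1" "f d0 = 0"
  shows "\<pi> ` X = X"
proof -
  have "f 2 = 0" using pair d0 by metis
  moreover have "(3::nat) \<le> m - 1" using m4 by simp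
  then have "f 3 = f 2" by (intro pair[rule_format]) auto
  then have "f 3 = 0" using \<open>f 2 = 0\<close> by simp
  ultimately have X2: "(\<pi> ^^ 2) ` X = X" and X3: "(\<pi> ^^ 3) ` X = X" using f_zero_inv by blast+
  have "\<pi> ` X = \<pi> ` ((\<pi> ^^ 2) ` X)" using X2 by simp
  also have "\<dots> = (\<pi> ^^ 3) ` X" unfolding image_comp by (simp add: numeral_3_eq_3 numeral_2_eq_2)
  finally show ?thesis using X3 by simp
qed

lemma zf_period_r:
  assumes r: "zf p r = 0"
  shows "zf p (d + r) = zf p d"
proof -
  define Y where "Y = {y\<in>X. per y = p}"
  have YU: "Y \<subseteq> U" unfolding Y_def using XU by auto
  have "\<forall>y\<in>Y. (\<pi> ^^ r) y \<in> X"
  proof -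
    have "{y\<in>X. per y = p \<and> (\<pi> ^^ r) y \<notin> X} = {}" using r finX unfolding zf_def by simp
    then show ?thesis unfolding Y_def by auto
  qed
  then have "(\<pi> ^^ r) ` Y \<subseteq> Y" unfolding Y_def using per_pw XU by auto
  moreover have inj: "inj_on (\<pi> ^^ r) Y" using pw_inj YU inj_on_subset by blast
  moreover have "finite Y" unfolding Y_def using finX by auto
  ultimately have YY: "(\<pi> ^^ r) ` Y = Y" using endo_inj_surj by blast
  have "{y\<in>Y. (\<pi> ^^ d) y \<notin> X} = (\<pi> ^^ r) ` {y\<in>Y. (\<pi> ^^ (d + r)) y \<notin> X}"
  proof
    show "(\<pi> ^^ r) ` {y\<in>Y. (\<pi> ^^ (d + r)) y \<notin> X} \<subseteq> {y\<in>Y. (\<pi> ^^ d) y \<notin> X}"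
      using YY pw_add by auto
    show "{y\<in>Y. (\<pi> ^^ d) y \<notin> X} \<subseteq> (\<pi> ^^ r) ` {y\<in>Y. (\<pi> ^^ (d + r)) y \<notin> X}"
    proof
      fix y assume y: "y \<in> {y\<in>Y. (\<pi> ^^ d) y \<notin> X}"
      then obtain x where x: "x \<in> Y" "y = (\<pi> ^^ r) x" using YY by blast
      then have "(\<pi> ^^ (d + r)) x \<notin> X" using y pw_add by auto
      then show "y \<in> (\<pi> ^^ r) ` {y\<in>Y. (\<pi> ^^ (d + r)) y \<notin> X}" using x by auto
    qed
  qed
  then have "card {y\<in>Y. (\<pi> ^^ d) y \<notin> X} = card {y\<in>Y. (\<pi> ^^ (d + r)) y \<notin> X}"
    using card_image inj_on_subset[OF inj] by (metis (no_types, lifting) mem_Collect_eq subsetI)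
  moreover have "zf p d = card {y\<in>Y. (\<pi> ^^ d) y \<notin> X}" "zf p (d + r) = card {y\<in>Y. (\<pi> ^^ (d + r)) y \<notin> X}"
    unfolding zf_def Y_def by (simp_all add: conj_assoc)
  ultimately show ?thesis by simp
qed

lemma two_periodic_D0:
  fixes u v :: "nat \<Rightarrow> nat"
  assumes q: "0 < qa" "0 < qb" "qa + qb \<le> m - 1"
    and pu: "\<forall>d. u (d + qa) = u d" and pv: "\<forall>d. v (d + qb) = v d"
    and fuv: "\<forall>d. f d = u d + v d"
    and pair: "\<forall>d. 2 \<le> d \<longrightarrow> d \<le> m - 1 \<longrightarrow> f d = f 2"
  shows "f 2 = f 0"
proof -
  define z :: "nat \<Rightarrow> nat \<Rightarrow> int" where "z k d = (if k = 0 then int (u d) else int (v d))" for k d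
  define pr :: "nat \<Rightarrow> nat" where "pr k = (if k = 0 then qa else qb)" for k
  have "- int (f 2) + (\<Sum>k\<in>{0,1}. z k 0) = 0"
  proof (rule rec_lemma[where a=2 and L="m-2"])
    show "finite {0::nat,1}" by simp
    show "\<forall>k\<in>{0,1}. 0 < pr k \<and> (\<forall>d. z k (d + pr k) = z k d)"
      using q pu pv unfolding z_def pr_def by auto
    show "\<forall>d. 2 \<le> d \<longrightarrow> d < 2 + (m - 2) \<longrightarrow> - int (f 2) + (\<Sum>k\<in>{0,1}. z k d) = 0"
    proof (intro allI impI)
      fix d :: nat assume d: "2 \<le> d" "d < 2 + (m - 2)"
      then have "f d = f 2" by (intro pair[rule_format]) auto
      moreover have "(\<Sum>k\<in>{0,1}. z k d) = int (f d)" unfolding z_def using fuv by simp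
      ultimately show "- int (f 2) + (\<Sum>k\<in>{0,1}. z k d) = 0" by simp
    qed
    show "1 + (\<Sum>k\<in>{0,1}. pr k - 1) \<le> m - 2" using q unfolding pr_def by auto
  qed
  then show ?thesis using fuv unfolding z_def by simp
qed

end

context perm_X
begin

lemma inv_pw: assumes "\<pi> ` X = X" shows "(\<pi> ^^ d) ` X = X"
proof (induction d)
  case 0 then show ?case by simp
next
  case (Suc d)
  have "(\<pi> ^^ Suc d) ` X = \<pi> ` ((\<pi> ^^ d) ` X)" by (simp add: image_comp)
  then show ?case using Suc assms by simp
qed

lemma inv_f: assumes "\<pi> ` X = X" shows "f d = 0"
proof -
  have "{y\<in>X. (\<pi> ^^ d) y \<notin> X} = {}" using inv_pw[OF assms, of d] by auto
  then show ?thesis unfolding f_def by (metis card.empty)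
qed

lemma generic:
  assumes m4: "4 \<le> m" and cU: "card U \<le> m"
    and pair: "\<forall>d. 2 \<le> d \<longrightarrow> d \<le> m - 1 \<longrightarrow> f d = f 2"
  shows "\<pi> ` X = X \<or> (\<exists>u\<in>U. per u = m \<and> orb u = U) \<or>
    (m = 5 \<and> (\<exists>u v. u \<in> X \<and> v \<in> X \<and> \<pi> u \<notin> X \<and> \<pi> v \<notin> X \<and> per u = 2 \<and> per v = 3))"
proof -
  define K where "K = per ` U"
  have finK: "finite K" unfolding K_def using finU by simp
  have Kpos: "\<forall>p\<in>K. 0 < p" unfolding K_def using per_prop by auto
  have fK: "f d = (\<Sum>p\<in>K. zf p d)" for d unfolding K_def by (rule f_sum)
  have D0: "\<pi> ` X = X" if "2 \<le> d0" "d0 \<le> m - 1" "f d0 = 0" for d0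
    using D0_inv[OF m4 pair that] .
  have f2: "f d = f 2" if "2 \<le> d" "d \<le> m - 1" for d using pair that by blast
  show ?thesis
  proof (cases "1 + (\<Sum>p\<in>K. p - 1) \<le> m - 2")
    case True
    have "- int (f 2) + (\<Sum>p\<in>K. int (zf p 0)) = 0"
    proof (rule rec_lemma[where a=2 and L="m-2" and per="\<lambda>p. p"])
      show "finite K" by fact
      show "\<forall>k\<in>K. 0 < k \<and> (\<forall>d. int (zf k (d + k)) = int (zf k d))" using Kpos zf_per by auto
      show "\<forall>d. 2 \<le> d \<longrightarrow> d < 2 + (m - 2) \<longrightarrow> - int (f 2) + (\<Sum>k\<in>K. int (zf k d)) = 0"
      proof (intro allI impI)
        fix d :: nat assume d: "2 \<le> d" "d < 2 + (m - 2)"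
        then have "f d = f 2" by (intro f2) auto
        moreover have "(\<Sum>k\<in>K. int (zf k d)) = int (f d)" unfolding fK by simp
        ultimately show "- int (f 2) + (\<Sum>k\<in>K. int (zf k d)) = 0" by simp
      qed
      show "1 + (\<Sum>k\<in>K. k - 1) \<le> m - 2" using True by simp
    qed
    then have "int (f 2) = int (f 0)" unfolding fK by simp
    then have "f 2 = 0" using f0 by simp
    then show ?thesis using D0[of 2] m4 by auto
  next
    case False
    have sumK: "(\<Sum>p\<in>K. p) \<le> m" using sum_per_le cU unfolding K_def by simp
    have eq: "(\<Sum>p\<in>K. p - 1) + card K = (\<Sum>p\<in>K. p)"
    proof -
      have "(\<Sum>p\<in>K. p - 1) + card K = (\<Sum>p\<in>K. p - 1) + (\<Sum>p\<in>K. (1::nat))" by simp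
      also have "\<dots> = (\<Sum>p\<in>K. p - 1 + 1)" by (rule sum.distrib[symmetric])
      also have "\<dots> = (\<Sum>p\<in>K. p)" using Kpos by (intro sum.cong) auto
      finally show ?thesis .
    qed
    have cK: "card K \<le> 2" using False sumK eq by linarith
    consider "card K = 0" | "card K = 1" | "card K = 2" using cK by linarith
    then show ?thesis
    proof cases
      case 1
      then have "K = {}" using finK by simp
      then have "U = {}" unfolding K_def by simp
      then have "X = {}" using XU by simp
      then show ?thesis by simp
    next
      case 2
      then obtain p where Kp: "K = {p}" using card_1_singletonE by blast
      then have pm: "p \<le> m" "m - 2 \<le> p - 1" using sumK False by auto
      then consider "p = m - 1" | "p = m" using m4 by linarith
      then show ?thesis
      proof cases
        case 1
        have "{y\<in>X. (\<pi> ^^ (m - 1)) y \<notin> X} = {}"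
        proof -
          have "(\<pi> ^^ (m - 1)) y = y" if "y \<in> X" for y
          proof -
            have "y \<in> U" using that XU by auto
            then have "per y = m - 1" using Kp 1 unfolding K_def by auto
            then show ?thesis using per_prop[OF \<open>y \<in> U\<close>] by simp
          qed
          then show ?thesis by auto
        qed
        then have "f (m - 1) = 0" unfolding f_def by (metis card.empty)
        then show ?thesis using D0[of "m - 1"] m4 by auto
      next
        case 2
        have "U \<noteq> {}" using Kp unfolding K_def by auto
        then obtain u where u: "u \<in> U" by auto
        then have pu: "per u = m" using Kp 2 unfolding K_def by auto
        have "orb u \<subseteq> U" using orb_sub u by simp
        moreover have "card U \<le> card (orb u)" using card_orb u pu cU by simp
        ultimately have "orb u = U" using card_seteq finU by blast
        then show ?thesis using u pu by auto
      qed
    next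
      case 3
      then obtain p1 p2 where Kp: "K = {p1, p2}" "p1 < p2"
        by (metis card_2_iff linorder_neqE_nat insert_commute)
      have p1pos: "0 < p1" using Kpos Kp by auto
      have pm: "p1 + p2 = m" using sumK False eq Kp 3 by simp
      have fd: "f d = zf p1 d + zf p2 d" for d using fK Kp by simp
      have z0: "zf p d = 0" if pd: "p dvd d" for p d
      proof -
        obtain q where "d = p * q" using pd by (auto elim: dvdE)
        then show ?thesis using periodic_iter[of "zf p" p 0 q] zf_per zf0 by simp
      qed
      show ?thesis
      proof (cases "f 2 = 0")
        case True then show ?thesis using D0[of 2] m4 by auto
      next
        case Dpos: False
        have notA1: "0 < zf p1 r" if "0 < r" "r < p1" for r
        proof (rule ccontr)
          assume "\<not> 0 < zf p1 r"
          then have "zf p1 r = 0" by simp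
          then have per_r: "\<forall>d. zf p1 (d + r) = zf p1 d" using zf_period_r by blast
          have "f 2 = f 0"
          proof (rule two_periodic_D0[where u="zf p2" and v="zf p1" and qa=p2 and qb=r])
            show "0 < p2" "0 < r" "p2 + r \<le> m - 1" using that pm Kp by auto
            show "\<forall>d. zf p2 (d + p2) = zf p2 d" using zf_per by blast
            show "\<forall>d. zf p1 (d + r) = zf p1 d" by fact
            show "\<forall>d. f d = zf p2 d + zf p1 d" using fd by simp
          qed (fact pair)
          then show False using Dpos f0 by simp
        qed
        have notA2: "0 < zf p2 r" if "0 < r" "r < p2" for r
        proof (rule ccontr)
          assume "\<not> 0 < zf p2 r"
          then have "zf p2 r = 0" by simp
          then have per_r: "\<forall>d. zf p2 (d + r) = zf p2 d" using zf_period_r by blast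
          have "f 2 = f 0"
          proof (rule two_periodic_D0[where u="zf p1" and v="zf p2" and qa=p1 and qb=r])
            show "0 < p1" "0 < r" "p1 + r \<le> m - 1" using that pm Kp p1pos by auto
            show "\<forall>d. zf p1 (d + p1) = zf p1 d" using zf_per by blast
            show "\<forall>d. zf p2 (d + r) = zf p2 d" by fact
            show "\<forall>d. f d = zf p1 d + zf p2 d" using fd by simp
          qed (fact pair)
          then show False using Dpos f0 by simp
        qed
        have p1ge2: "2 \<le> p1"
        proof (rule ccontr)
          assume "\<not> 2 \<le> p1"
          then have "p1 = 1" using p1pos by simp
          then have "f p2 = 0" using fd z0 by simp
          moreover have "2 \<le> p2" "p2 \<le> m - 1" using pm \<open>p1 = 1\<close> m4 by auto
          ultimately have "\<pi> ` X = X" using D0 by blast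
          then have "f 2 = 0" by (rule inv_f)
          then show False using Dpos by simp
        qed
        have p2p1: "p2 = Suc p1"
        proof (rule ccontr)
          assume "p2 \<noteq> Suc p1"
          then have d2: "2 \<le> p2 - p1" "p2 - p1 \<le> m - 1" using Kp pm p1pos by auto
          have "f (p2 - p1) = zf p1 (p2 - p1) + zf p2 (p2 - p1)" by (rule fd)
          moreover have "zf p1 (p2 - p1) = zf p1 p2" using zf_per[of p1 "p2 - p1"] Kp by simp
          moreover have "0 < zf p2 (p2 - p1)" using notA2 Kp p1pos by simp
          moreover have "f p2 = zf p1 p2" using fd z0 by simp
          moreover have "f (p2 - p1) = f 2" by (rule f2) (use d2 in auto)
          moreover have "f p2 = f 2" by (rule f2) (use p1ge2 pm Kp in auto)
          ultimately show False by simp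
        qed
        have p1e2: "p1 = 2"
        proof (rule ccontr)
          assume "p1 \<noteq> 2"
          then have p13: "3 \<le> p1" using p1ge2 by simp
          have "f (2 * p1) = zf p1 (2 * p1) + zf p2 (2 * p1)" by (rule fd)
          moreover have "zf p1 (2 * p1) = 0" using z0 by simp
          moreover have "zf p2 (2 * p1) = zf p2 (p1 - 1)"
            using zf_per[of p2 "p1 - 1"] p2p1 p13 by (simp add: mult_2)
          moreover have "f (p1 - 1) = zf p1 (p1 - 1) + zf p2 (p1 - 1)" by (rule fd)
          moreover have "0 < zf p1 (p1 - 1)" using notA1 p13 by simp
          moreover have "f (p1 - 1) = f 2" by (rule f2) (use p13 pm p2p1 in auto)
          moreover have "f (2 * p1) = f 2" by (rule f2) (use p13 pm p2p1 in auto)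
          ultimately show False by simp
        qed
        have m5: "m = 5" using pm p1e2 p2p1 by simp
        have "0 < zf 2 1" using notA1 p1e2 by simp
        then have "{y\<in>X. per y = 2 \<and> (\<pi> ^^ 1) y \<notin> X} \<noteq> {}" unfolding zf_def by (metis card.empty less_irrefl)
        then obtain u where u: "u \<in> X" "per u = 2" "\<pi> u \<notin> X" by auto
        have "0 < zf 3 1" using notA2 p1e2 p2p1 by simp
        then have "{y\<in>X. per y = 3 \<and> (\<pi> ^^ 1) y \<notin> X} \<noteq> {}" unfolding zf_def by (metis card.empty less_irrefl)
        then obtain v where v: "v \<in> X" "per v = 3" "\<pi> v \<notin> X" by auto
        show ?thesis using m5 u v by blast
      qed
    qed
  qed
qed

end

definition adj :: "nat set \<Rightarrow> nat" where "adj I = card {i. i \<in> I \<and> Suc i \<in> I}"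

lemma adj_union:
  assumes "finite A" "finite B" "sep A B"
  shows "adj (A \<union> B) = adj A + adj B"
proof -
  have "{i. i \<in> A \<union> B \<and> Suc i \<in> A \<union> B} = {i. i \<in> A \<and> Suc i \<in> A} \<union> {i. i \<in> B \<and> Suc i \<in> B}"
    using assms(3) unfolding sep_def by force
  moreover have "{i. i \<in> A \<and> Suc i \<in> A} \<inter> {i. i \<in> B \<and> Suc i \<in> B} = {}"
    using assms(3) unfolding sep_def by force
  moreover have "finite {i. i \<in> A \<and> Suc i \<in> A}" "finite {i. i \<in> B \<and> Suc i \<in> B}"
    using assms(1,2) by auto
  ultimately show ?thesis unfolding adj_def by (simp add: card_Un_disjoint)
qed

lemma adj_interval: "adj {a..b} = b - a"
proof -
  have "{i. i \<in> {a..b} \<and> Suc i \<in> {a..b}} = {a..<b}" by auto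
  then show ?thesis unfolding adj_def by simp
qed

lemma adj_single: "adj {a} = 0"
  unfolding adj_def by simp

lemma iso1:
  assumes AU: "\<forall>i\<in>{1..m}. A i \<subseteq> U"
    and cT: "\<forall>y\<in>U. card {i\<in>{1..m}. y \<in> A i} = 1"
    and cA: "\<forall>i\<in>{1..m}. card (A i) = 1"
  shows "\<exists>\<sigma>. bij_betw \<sigma> U {1..m} \<and> (\<forall>i\<in>{1..m}. \<sigma> ` A i = {i})"
proof -
  define \<sigma> where "\<sigma> y = the_elem {i\<in>{1..m}. y \<in> A i}" for y
  have Ty: "{i\<in>{1..m}. y \<in> A i} = {\<sigma> y}" if yU: "y \<in> U" for y
  proof -
    have "card {i\<in>{1..m}. y \<in> A i} = 1" using cT yU by blast
    then obtain i where "{i\<in>{1..m}. y \<in> A i} = {i}" by (rule card_1_singletonE)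
    then show ?thesis unfolding \<sigma>_def by simp
  qed
  have Ai: "\<exists>a. A i = {a}" if "i \<in> {1..m}" for i using cA that card_1_singletonE by blast
  have inj: "inj_on \<sigma> U"
  proof (rule inj_onI)
    fix y y' assume yy: "y \<in> U" "y' \<in> U" "\<sigma> y = \<sigma> y'"
    have "\<sigma> y \<in> {1..m}" "y \<in> A (\<sigma> y)" using Ty[OF yy(1)] by auto
    moreover have "y' \<in> A (\<sigma> y)" using Ty[OF yy(2)] yy(3) by auto
    moreover obtain a where "A (\<sigma> y) = {a}" using Ai \<open>\<sigma> y \<in> {1..m}\<close> by blast
    ultimately show "y = y'" by simp
  qed
  have img: "\<sigma> ` A i = {i}" if i: "i \<in> {1..m}" for i
  proof -
    obtain a where a: "A i = {a}" using Ai i by blast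
    moreover have "A i \<subseteq> U" using AU i by blast
    ultimately have "a \<in> U" by auto
    have "i \<in> {i\<in>{1..m}. a \<in> A i}" using a i by auto
    then have "\<sigma> a = i" using Ty[OF \<open>a \<in> U\<close>] by (metis singletonD)
    then show ?thesis using a by simp
  qed
  have "\<sigma> ` U = {1..m}"
  proof
    show "\<sigma> ` U \<subseteq> {1..m}"
    proof
      fix x assume "x \<in> \<sigma> ` U"
      then obtain y where y: "y \<in> U" "x = \<sigma> y" by blast
      have "\<sigma> y \<in> {i\<in>{1..m}. y \<in> A i}" using Ty[OF y(1)] by simp
      then show "x \<in> {1..m}" using y by simp
    qed
    show "{1..m} \<subseteq> \<sigma> ` U"
    proof
      fix i assume i: "i \<in> {1..m}"
      then have "i \<in> \<sigma> ` A i" using img by auto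
      moreover have "A i \<subseteq> U" using AU i by blast
      ultimately show "i \<in> \<sigma> ` U" by blast
    qed
  qed
  then show ?thesis using inj img unfolding bij_betw_def by blast
qed

lemma iso1c:
  assumes AU: "\<forall>i\<in>{1..m}. A i \<subseteq> U"
    and cT: "\<forall>y\<in>U. card {i\<in>{1..m}. y \<notin> A i} = 1"
    and cA: "\<forall>i\<in>{1..m}. card (U - A i) = 1"
  shows "iso_sys U A {1..m} (compl_sys {1..m} (\<lambda>i. {i})) m"
proof -
  define B where "B i = U - A i" for i
  have "\<exists>\<sigma>. bij_betw \<sigma> U {1..m} \<and> (\<forall>i\<in>{1..m}. \<sigma> ` B i = {i})"
  proof (rule iso1)
    show "\<forall>i\<in>{1..m}. B i \<subseteq> U" unfolding B_def by auto
    show "\<forall>y\<in>U. card {i\<in>{1..m}. y \<in> B i} = 1"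
    proof
      fix y assume "y \<in> U"
      then have "{i\<in>{1..m}. y \<in> B i} = {i\<in>{1..m}. y \<notin> A i}" unfolding B_def by auto
      then show "card {i\<in>{1..m}. y \<in> B i} = 1" using cT \<open>y \<in> U\<close> by simp
    qed
    show "\<forall>i\<in>{1..m}. card (B i) = 1" using cA unfolding B_def by simp
  qed
  then obtain \<sigma> where \<sigma>: "bij_betw \<sigma> U {1..m}" "\<forall>i\<in>{1..m}. \<sigma> ` B i = {i}" by blast
  have "\<sigma> ` A i = compl_sys {1..m} (\<lambda>i. {i}) i" if i: "i \<in> {1..m}" for i
  proof -
    have "A i = U - B i" unfolding B_def using AU i by auto
    then have "\<sigma> ` A i = \<sigma> ` (U - B i)" by simp
    also have "\<dots> = \<sigma> ` U - \<sigma> ` B i"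
      by (rule inj_on_image_set_diff) (use \<sigma>(1) in \<open>auto simp: bij_betw_def B_def\<close>)
    also have "\<dots> = {1..m} - {i}" using \<sigma> i unfolding bij_betw_def by simp
    finally show ?thesis unfolding compl_sys_def by simp
  qed
  then show ?thesis unfolding iso_sys_def using \<sigma>(1) by blast
qed

locale sorb = perm_sys U \<pi> for U :: "'a set" and \<pi> +
  fixes A :: "nat \<Rightarrow> 'a set" and m :: nat and u :: 'a
  assumes ss: "set_system U m A" and harm: "harmonic U m A"
    and Api: "\<forall>i\<in>{1..<m}. \<pi> ` A i = A (Suc i)"
    and m1: "1 \<le> m" and uU: "u \<in> U" and peru: "per u = m" and orbu: "orb u = U"
begin

definition T :: "'a \<Rightarrow> nat set" where "T y = {i\<in>{1..m}. y \<in> A i}"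
definition nxt :: "nat \<Rightarrow> nat" where "nxt i = (if i = m then 1 else Suc i)"
definition adjc :: "nat set \<Rightarrow> nat" where "adjc I = card {i\<in>{1..m}. i \<in> I \<and> nxt i \<in> I}"

lemma AU: "i \<in> {1..m} \<Longrightarrow> A i \<subseteq> U" using ss unfolding set_system_def by auto

lemma cardU: "card U = m" using card_orb[OF uU] peru orbu by simp

lemma Apw: "i \<in> {1..m} \<Longrightarrow> A i = (\<pi> ^^ (i - 1)) ` A 1"
proof (induction i)
  case 0 then show ?case by simp
next
  case (Suc i)
  show ?case
  proof (cases "i = 0")
    case True then show ?thesis by simp
  next
    case False
    then have "A (Suc i) = \<pi> ` A i" using Api Suc.prems by auto
    also have "\<dots> = \<pi> ` ((\<pi> ^^ (i - 1)) ` A 1)" using Suc False by simp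
    also have "\<dots> = (\<pi> ^^ Suc (i - 1)) ` A 1" by (simp add: image_comp)
    also have "Suc (i - 1) = i" using False by simp
    finally show ?thesis by simp
  qed
qed

lemma pim: assumes "y \<in> U" shows "(\<pi> ^^ m) y = y"
proof -
  obtain j where "y = (\<pi> ^^ j) u" using assms orbu unfolding orb_def by auto
  then show ?thesis using pw_comm[of m j u] per_prop[OF uU] peru by simp
qed

lemma pi_m1: assumes "y \<in> U" shows "\<pi> ((\<pi> ^^ (m - 1)) y) = y"
proof -
  have "\<pi> ((\<pi> ^^ (m - 1)) y) = (\<pi> ^^ Suc (m - 1)) y" by simp
  also have "\<dots> = y" using m1 pim[OF assms] by simp
  finally show ?thesis .
qed

lemma key: assumes y: "y \<in> U" and i: "i \<in> {1..m}" shows "i \<in> T y \<longleftrightarrow> nxt i \<in> T (\<pi> y)"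
proof (cases "i = m")
  case True
  have "y \<in> A m \<longleftrightarrow> \<pi> y \<in> A 1"
  proof
    assume "y \<in> A m"
    then obtain x where x: "x \<in> A 1" "y = (\<pi> ^^ (m - 1)) x" using Apw[of m] m1 by auto
    then have "x \<in> U" using AU[of 1] m1 by auto
    then show "\<pi> y \<in> A 1" using x pi_m1 by simp
  next
    assume "\<pi> y \<in> A 1"
    then have "(\<pi> ^^ (m - 1)) (\<pi> y) \<in> A m" using Apw[of m] m1 by auto
    moreover have "(\<pi> ^^ (m - 1)) (\<pi> y) = y"
      using pi_m1[OF y] pw_comm[of "m - 1" 1 y] by simp
    ultimately show "y \<in> A m" by simp
  qed
  then show ?thesis using True m1 pi_in[OF y] unfolding T_def nxt_def by auto
next
  case False
  then have im: "i \<in> {1..<m}" using i by auto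
  have "y \<in> A i \<longleftrightarrow> \<pi> y \<in> A (Suc i)"
  proof
    show "y \<in> A i \<Longrightarrow> \<pi> y \<in> A (Suc i)" using Api im by (metis imageI)
    assume "\<pi> y \<in> A (Suc i)"
    then obtain x where x: "x \<in> A i" "\<pi> y = \<pi> x" using Api im by force
    then have "x \<in> U" using AU i by auto
    then show "y \<in> A i" using x pi_inj y unfolding inj_on_def by metis
  qed
  then show ?thesis using False i unfolding T_def nxt_def by auto
qed

lemma T_sub: "T y \<subseteq> {1..m}" unfolding T_def by auto
lemma T_in: "i \<in> T y \<Longrightarrow> i \<in> {1..m}" unfolding T_def by auto

lemma finT: "finite (T y)" using T_sub finite_subset by blast

lemma nxt_bij: "bij_betw nxt {1..m} {1..m}"
proof -
  have "inj_on nxt {1..m}" unfolding inj_on_def nxt_def by auto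
  moreover have "nxt ` {1..m} = {1..m}"
  proof
    show "nxt ` {1..m} \<subseteq> {1..m}" unfolding nxt_def using m1 by auto
    show "{1..m} \<subseteq> nxt ` {1..m}"
    proof
      fix j assume j: "j \<in> {1..m}"
      show "j \<in> nxt ` {1..m}"
      proof (cases "j = 1")
        case True then have "nxt m = j" unfolding nxt_def by simp
        then show ?thesis using m1 by force
      next
        case False then have "nxt (j - 1) = j" using j unfolding nxt_def by auto
        moreover have "j - 1 \<in> {1..m}" using j False by auto
        ultimately show ?thesis by force
      qed
    qed
  qed
  ultimately show ?thesis unfolding bij_betw_def by simp
qed

lemma nxt_in: "i \<in> {1..m} \<Longrightarrow> nxt i \<in> {1..m}" unfolding nxt_def using m1 by auto

lemma T_pi: assumes y: "y \<in> U" shows "T (\<pi> y) = nxt ` T y"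
proof
  show "nxt ` T y \<subseteq> T (\<pi> y)"
  proof
    fix j assume "j \<in> nxt ` T y"
    then obtain i where i: "i \<in> T y" "j = nxt i" by blast
    then have "i \<in> {1..m}" using T_sub by blast
    then show "j \<in> T (\<pi> y)" using key[OF y] i by blast
  qed
  show "T (\<pi> y) \<subseteq> nxt ` T y"
  proof
    fix j assume j: "j \<in> T (\<pi> y)"
    then have "j \<in> {1..m}" by (rule T_in)
    then have "j \<in> nxt ` {1..m}" using nxt_bij unfolding bij_betw_def by simp
    then obtain i where i: "i \<in> {1..m}" "nxt i = j" by blast
    then have "i \<in> T y" using key[OF y i(1)] j by simp
    then show "j \<in> nxt ` T y" using i by auto
  qed
qed

lemma card_T_pi: "y \<in> U \<Longrightarrow> card (T (\<pi> y)) = card (T y)"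
  using T_pi card_image nxt_bij T_sub unfolding bij_betw_def by (metis inj_on_subset)

lemma adjc_T_pi: assumes y: "y \<in> U" shows "adjc (T (\<pi> y)) = adjc (T y)"
proof -
  have inj: "inj_on nxt {1..m}" using nxt_bij unfolding bij_betw_def by simp
  have "{i\<in>{1..m}. i \<in> T (\<pi> y) \<and> nxt i \<in> T (\<pi> y)} = nxt ` {i\<in>{1..m}. i \<in> T y \<and> nxt i \<in> T y}"
  proof
    show "nxt ` {i\<in>{1..m}. i \<in> T y \<and> nxt i \<in> T y} \<subseteq> {i\<in>{1..m}. i \<in> T (\<pi> y) \<and> nxt i \<in> T (\<pi> y)}"
    proof
      fix j assume "j \<in> nxt ` {i\<in>{1..m}. i \<in> T y \<and> nxt i \<in> T y}"
      then obtain i where i: "i \<in> {1..m}" "i \<in> T y" "nxt i \<in> T y" "j = nxt i" by blast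
      have "j \<in> {1..m}" using nxt_in i by blast
      moreover have "j \<in> T (\<pi> y)" using T_pi[OF y] i by blast
      moreover have "nxt j \<in> T (\<pi> y)" using T_pi[OF y] i by blast
      ultimately show "j \<in> {i\<in>{1..m}. i \<in> T (\<pi> y) \<and> nxt i \<in> T (\<pi> y)}" by blast
    qed
    show "{i\<in>{1..m}. i \<in> T (\<pi> y) \<and> nxt i \<in> T (\<pi> y)} \<subseteq> nxt ` {i\<in>{1..m}. i \<in> T y \<and> nxt i \<in> T y}"
    proof
      fix j assume j: "j \<in> {i\<in>{1..m}. i \<in> T (\<pi> y) \<and> nxt i \<in> T (\<pi> y)}"
      then obtain i where i: "i \<in> T y" "nxt i = j" using T_pi[OF y] by auto
      obtain i' where i': "i' \<in> T y" "nxt i' = nxt j" using j T_pi[OF y] by auto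
      have "i \<in> {1..m}" "i' \<in> {1..m}" using i(1) i'(1) T_in by auto
      moreover have "j \<in> {1..m}" using j by auto
      ultimately have "i' = nxt i" using i i' nxt_bij unfolding bij_betw_def inj_on_def
        by (metis image_eqI)
      then show "j \<in> nxt ` {i\<in>{1..m}. i \<in> T y \<and> nxt i \<in> T y}"
        using i i' \<open>i \<in> {1..m}\<close> by auto
    qed
  qed
  then show ?thesis unfolding adjc_def using card_image inj inj_on_subset
    by (metis (no_types, lifting) mem_Collect_eq subsetI)
qed

lemma T_all: assumes y: "y \<in> U" shows "card (T y) = card (T u) \<and> adjc (T y) = adjc (T u)"
proof -
  obtain j where yj: "y = (\<pi> ^^ j) u" using y orbu unfolding orb_def by auto
  have "card (T ((\<pi> ^^ j) u)) = card (T u) \<and> adjc (T ((\<pi> ^^ j) u)) = adjc (T u)"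
  proof (induction j)
    case 0 then show ?case by simp
  next
    case (Suc j)
    have "(\<pi> ^^ j) u \<in> U" using pw_in uU by blast
    then show ?case using Suc card_T_pi adjc_T_pi by simp
  qed
  then show ?thesis using yj by simp
qed

lemma adjc_adj: assumes I: "I \<subseteq> {1..m}" shows "adjc I = adj I + (if m \<in> I \<and> 1 \<in> I then 1 else 0)"
proof -
  have eq: "{i\<in>{1..m}. i \<in> I \<and> nxt i \<in> I} = {i. i \<in> I \<and> Suc i \<in> I} \<union> (if m \<in> I \<and> 1 \<in> I then {m} else {})"
    using I unfolding nxt_def by (auto split: if_splits)
  have disj: "{i. i \<in> I \<and> Suc i \<in> I} \<inter> (if m \<in> I \<and> 1 \<in> I then {m} else {}) = {}"
    using I by auto
  have "finite I" using I finite_subset by blast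
  then have fin: "finite {i. i \<in> I \<and> Suc i \<in> I}" by (rule finite_subset[rotated]) auto
  show ?thesis unfolding adjc_def adj_def eq using card_Un_disjoint[OF fin _ disj] by simp
qed

lemma HI_T: "I \<subseteq> {1..m} \<Longrightarrow> HI U A I = {y\<in>U. I \<subseteq> T y}"
  unfolding HI_def T_def by auto

lemma finU': "finite U" using finU .

lemma trace_eq:
  assumes J: "J \<subseteq> {1..m}" and I: "I \<subseteq> {1..m}" and rd: "run_decomp J = run_decomp I"
    and y1: "y1 \<in> U" "I \<subseteq> T y1" and cJ: "card J = card (T u)"
  shows "\<exists>y\<in>U. T y = J"
proof -
  have "card (HI U A J) = card (HI U A I)" using harm J I rd unfolding harmonic_def by blast
  moreover have "y1 \<in> HI U A I" using HI_T[OF I] y1 by auto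
  moreover have "finite (HI U A I)" "finite (HI U A J)" unfolding HI_def using finU by auto
  ultimately have "HI U A J \<noteq> {}" by (metis card_0_eq empty_iff)
  then obtain y where y: "y \<in> U" "J \<subseteq> T y" using HI_T[OF J] by auto
  have "card (T y) = card J" using T_all[OF y(1)] cJ by simp
  then have "J = T y" using card_subset_eq[OF finT y(2)] by simp
  then show ?thesis using y by auto
qed

end

context sorb
begin

lemma rd_int: "1 \<le> a \<Longrightarrow> a \<le> b \<Longrightarrow> run_decomp {a..b} = {# b - a + 1 #}"
  by (rule run_decomp_interval)

lemma contra:
  assumes y0: "y0 \<in> U" and h1: "1 \<in> T y0" and hm: "m \<notin> T y0"
    and k2: "2 \<le> card (T u)" and km: "card (T u) \<le> m - 2"
  shows False
proof -
  define T0 where "T0 = T y0"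
  define \<kappa> where "\<kappa> = card (T u)"
  define \<alpha> where "\<alpha> = adjc (T u)"
  have cT0: "card T0 = \<kappa>" using T_all[OF y0] unfolding T0_def \<kappa>_def by simp
  have aT: "adjc (T y) = \<alpha>" if "y \<in> U" for y using T_all[OF that] unfolding \<alpha>_def by simp
  have finT0: "finite T0" unfolding T0_def by (rule finT)
  have T0ne: "T0 \<noteq> {}" using h1 unfolding T0_def by auto
  define e where "e = Max T0"
  have eT0: "e \<in> T0" unfolding e_def using finT0 T0ne by simp
  have T0e: "T0 \<subseteq> {1..e}"
  proof
    fix x assume "x \<in> T0"
    then show "x \<in> {1..e}" using T_in[of x y0] Max_ge[OF finT0] unfolding T0_def e_def by auto
  qed
  have "e \<in> {1..m}" using eT0 T_in[of e y0] unfolding T0_def by blast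
  moreover have "e \<noteq> m" using eT0 hm unfolding T0_def by blast
  ultimately have em: "e \<le> m - 1" by auto
  have e1: "1 \<le> e" using T0e eT0 by auto
  show False
  proof (cases "T0 = {1..e}")
    case True
    then have ek: "e = \<kappa>" using cT0 by simp
    define y' where "y' = (\<pi> ^^ (m - 1)) y0"
    have y'U: "y' \<in> U" unfolding y'_def using pw_in y0 by blast
    have py': "\<pi> y' = y0" unfolding y'_def using pi_m1[OF y0] .
    have Ty': "T y' = {1..e-1} \<union> {m}"
    proof
      show "T y' \<subseteq> {1..e-1} \<union> {m}"
      proof
        fix i assume i: "i \<in> T y'"
        then have im: "i \<in> {1..m}" by (rule T_in)
        then have "nxt i \<in> T0" using key[OF y'U im] i py' unfolding T0_def by simp
        then have "nxt i \<in> {1..e}" using True by simp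
        then show "i \<in> {1..e-1} \<union> {m}" using im unfolding nxt_def by (auto split: if_splits)
      qed
      show "{1..e-1} \<union> {m} \<subseteq> T y'"
      proof
        fix i assume i: "i \<in> {1..e-1} \<union> {m}"
        then have im: "i \<in> {1..m}" using em m1 by auto
        have "nxt i \<in> {1..e}" using i e1 em unfolding nxt_def by auto
        then have "nxt i \<in> T (\<pi> y')" using True py' unfolding T0_def by simp
        then show "i \<in> T y'" using key[OF y'U im] by simp
      qed
    qed
    define J where "J = {1..e-1} \<union> {e+1}"
    have e2: "2 \<le> e" using ek k2 unfolding \<kappa>_def by simp
    have em2: "e \<le> m - 2" using ek km unfolding \<kappa>_def by simp
    have sep1: "sep {1..e-1} {e+1}" unfolding sep_def by auto
    have sep2: "sep {1..e-1} {m}" unfolding sep_def using em2 e2 by auto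
    have rdJ: "run_decomp J = run_decomp (T y')"
    proof -
      have "run_decomp J = run_decomp {1..e-1} + run_decomp {e+1}"
        unfolding J_def by (rule run_decomp_union) (use sep1 in auto)
      also have "\<dots> = run_decomp {1..e-1} + run_decomp {m}"
        using run_decomp_single[of "e+1"] run_decomp_single[of m] m1 by simp
      also have "\<dots> = run_decomp (T y')"
        unfolding Ty' by (rule run_decomp_union[symmetric]) (use sep2 in auto)
      finally show ?thesis .
    qed
    have JU: "J \<subseteq> {1..m}" unfolding J_def using em2 e2 by auto
    have cJ: "card J = card (T u)"
    proof -
      have "card J = card {1..e-1} + card {e+1}" unfolding J_def
        by (rule card_Un_disjoint) auto
      then show ?thesis using e2 ek unfolding \<kappa>_def by simp
    qed
    obtain y'' where y'': "y'' \<in> U" "T y'' = J"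
      using trace_eq[OF JU T_sub rdJ y'U order_refl cJ] by blast
    have "adjc J = adj J + 0" using adjc_adj[OF JU] em2 e2 unfolding J_def by auto
    also have "adj J = adj {1..e-1} + adj {e+1}" unfolding J_def
      by (rule adj_union) (use sep1 in auto)
    finally have aJ: "adjc J = e - 2" using adj_interval[of 1 "e-1"] adj_single by simp
    have "m \<in> T y'" "1 \<in> T y'" using Ty' e2 by auto
    then have "adjc (T y') = adj (T y') + 1" using adjc_adj[OF T_sub[of y']] by simp
    also have "adj (T y') = adj {1..e-1} + adj {m}" unfolding Ty'
      by (rule adj_union) (use sep2 in auto)
    finally have aT': "adjc (T y') = e - 2 + 1" using adj_interval[of 1 "e-1"] adj_single by simp
    have "adjc J = \<alpha>" using aT[OF y''(1)] y''(2) by simp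
    moreover have "adjc (T y') = \<alpha>" using aT[OF y'U] .
    ultimately show False using aJ aT' by simp
  next
    case False
    define G where "G = {1..e} - T0"
    have Gne: "G \<noteq> {}" using False T0e unfolding G_def by auto
    have finG: "finite G" unfolding G_def by simp
    define g0 where "g0 = Max G"
    have g0G: "g0 \<in> G" unfolding g0_def using finG Gne by simp
    have g0gt1: "1 < g0" using g0G h1 unfolding G_def T0_def by (cases "g0 = 1") auto
    have g0lte: "g0 < e" using g0G eT0 unfolding G_def by (cases "g0 = e") auto
    have g0T: "g0 \<notin> T0" using g0G unfolding G_def by simp
    have intT0: "{g0+1..e} \<subseteq> T0"
    proof
      fix x assume x: "x \<in> {g0+1..e}"
      have "x \<notin> G"
      proof
        assume "x \<in> G"
        then have "x \<le> g0" unfolding g0_def using finG by simp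
        then show False using x by simp
      qed
      then show "x \<in> T0" using x g0gt1 unfolding G_def by auto
    qed
    define T1 where "T1 = {x\<in>T0. x < g0}"
    have T0split: "T0 = T1 \<union> {g0+1..e}"
    proof
      show "T0 \<subseteq> T1 \<union> {g0+1..e}"
      proof
        fix x assume x: "x \<in> T0"
        then have "x \<le> e" "x \<noteq> g0" using T0e g0T by auto
        then show "x \<in> T1 \<union> {g0+1..e}" using x unfolding T1_def by auto
      qed
      show "T1 \<union> {g0+1..e} \<subseteq> T0" using intT0 unfolding T1_def by auto
    qed
    have finT1: "finite T1" unfolding T1_def using finT0 by simp
    have T1in: "T1 \<subseteq> {1..m}" unfolding T1_def T0_def using T_sub by auto
    have oneT1: "1 \<in> T1" unfolding T1_def using h1 g0gt1 unfolding T0_def by simp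
    define t where "t = m - e"
    have t1: "1 \<le> t" unfolding t_def using em m1 by simp
    have et: "e + t = m" unfolding t_def using em by simp
    define J where "J = T1 \<union> {g0+1+t..m}"
    have sepA: "sep T1 {g0+1..e}" unfolding sep_def T1_def by auto
    have sepB: "sep T1 {g0+1+t..m}" unfolding sep_def T1_def by auto
    have rdJ: "run_decomp J = run_decomp T0"
    proof -
      have "run_decomp J = run_decomp T1 + run_decomp {g0+1+t..m}"
        unfolding J_def by (rule run_decomp_union) (use finT1 sepB in auto)
      also have "run_decomp {g0+1+t..m} = {# m - (g0+1+t) + 1 #}"
        by (rule rd_int) (use g0lte et in auto)
      also have "m - (g0+1+t) + 1 = e - (g0+1) + 1" using et g0lte by simp
      also have "{# e - (g0+1) + 1 #} = run_decomp {g0+1..e}"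
        by (rule rd_int[symmetric]) (use g0lte in auto)
      also have "run_decomp T1 + run_decomp {g0+1..e} = run_decomp (T1 \<union> {g0+1..e})"
        by (rule run_decomp_union[symmetric]) (use finT1 sepA in auto)
      finally show ?thesis using T0split by simp
    qed
    have JU: "J \<subseteq> {1..m}" unfolding J_def using T1in by auto
    have T0U: "T0 \<subseteq> {1..m}" unfolding T0_def by (rule T_sub)
    have disjA: "T1 \<inter> {g0+1..e} = {}" unfolding T1_def by auto
    have disjB: "T1 \<inter> {g0+1+t..m} = {}" unfolding T1_def by auto
    have cJ: "card J = card (T u)"
    proof -
      have "card J = card T1 + card {g0+1+t..m}" unfolding J_def
        by (rule card_Un_disjoint) (use finT1 disjB in auto)
      moreover have "card T0 = card T1 + card {g0+1..e}" unfolding T0split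
        by (rule card_Un_disjoint) (use finT1 disjA in auto)
      moreover have "card {g0+1+t..m} = card {g0+1..e}" using et by simp
      ultimately show ?thesis using cT0 unfolding \<kappa>_def by simp
    qed
    obtain y'' where y'': "y'' \<in> U" "T y'' = J"
      using trace_eq[OF JU T0U rdJ y0 _ cJ] unfolding T0_def by blast
    have mJ: "m \<in> J" unfolding J_def using g0lte et by auto
    have "adjc J = adj J + 1" using adjc_adj[OF JU] mJ oneT1 unfolding J_def by auto
    also have "adj J = adj T1 + adj {g0+1+t..m}" unfolding J_def
      by (rule adj_union) (use finT1 sepB in auto)
    finally have aJ: "adjc J = adj T1 + (m - (g0+1+t)) + 1" using adj_interval by simp
    have "adjc T0 = adj T0 + 0" using adjc_adj[OF T0U] hm unfolding T0_def by simp
    also have "adj T0 = adj T1 + adj {g0+1..e}" unfolding T0split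
      by (rule adj_union) (use finT1 sepA in auto)
    finally have aT0: "adjc T0 = adj T1 + (e - (g0+1))" using adj_interval by simp
    have "m - (g0+1+t) = e - (g0+1)" using et by simp
    moreover have "adjc J = \<alpha>" using aT[OF y''(1)] y''(2) by simp
    moreover have "adjc T0 = \<alpha>" using aT[OF y0] unfolding T0_def by simp
    ultimately show False using aJ aT0 by simp
  qed
qed

end

context sorb
begin

lemma single_main:
  "(\<forall>i\<in>{1..m}. \<forall>j\<in>{1..m}. A i = A j) \<or> iso_sys U A {1..m} (\<lambda>i. {i}) m
    \<or> iso_sys U A {1..m} (compl_sys {1..m} (\<lambda>i. {i})) m"
proof (cases "\<pi> ` A 1 = A 1")
  case True
  have pw: "(\<pi> ^^ k) ` A 1 = A 1" for k
  proof (induction k)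
    case 0 then show ?case by simp
  next
    case (Suc k)
    have "(\<pi> ^^ Suc k) ` A 1 = \<pi> ` ((\<pi> ^^ k) ` A 1)" by (simp add: image_comp)
    then show ?case using Suc True by simp
  qed
  have h: "A i = A 1" if "i \<in> {1..m}" for i using Apw[OF that] pw[of "i - 1"] by simp
  have "\<forall>i\<in>{1..m}. \<forall>j\<in>{1..m}. A i = A j"
  proof (intro ballI)
    fix i j assume "i \<in> {1..m}" "j \<in> {1..m}"
    then show "A i = A j" using h[of i] h[of j] by argo
  qed
  then show ?thesis by blast
next
  case False
  have A1U: "A 1 \<subseteq> U" using AU m1 by simp
  have finA1: "finite (A 1)" using A1U finU finite_subset by blast
  have "\<exists>y0\<in>A 1. \<pi> y0 \<notin> A 1"
  proof (rule ccontr)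
    assume "\<not> (\<exists>y0\<in>A 1. \<pi> y0 \<notin> A 1)"
    then have "\<pi> ` A 1 \<subseteq> A 1" by auto
    moreover have "inj_on \<pi> (A 1)" using pi_inj A1U inj_on_subset by blast
    ultimately have "\<pi> ` A 1 = A 1" using endo_inj_surj finA1 by blast
    then show False using False by simp
  qed
  then obtain y0 where y0: "y0 \<in> A 1" "\<pi> y0 \<notin> A 1" by blast
  have y0U: "y0 \<in> U" using y0 A1U by auto
  have h1: "1 \<in> T y0" using y0 m1 unfolding T_def by simp
  have hm: "m \<notin> T y0"
  proof
    assume "m \<in> T y0"
    then have "nxt m \<in> T (\<pi> y0)" using key[OF y0U] m1 by simp
    then have "\<pi> y0 \<in> A 1" unfolding nxt_def T_def by simp
    then show False using y0 by simp
  qed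
  define \<kappa> where "\<kappa> = card (T u)"
  have cTy: "card (T y) = \<kappa>" if "y \<in> U" for y using T_all[OF that] unfolding \<kappa>_def by simp
  have k1: "1 \<le> \<kappa>" using cTy[OF y0U] h1 finT[of y0] by (metis One_nat_def Suc_leI card_gt_0_iff empty_iff)
  have km: "\<kappa> \<le> m - 1"
  proof -
    have "T y0 \<subseteq> {1..m} - {m}" using T_sub hm by auto
    then have "card (T y0) \<le> card ({1..m} - {m})" by (rule card_mono[rotated]) simp
    then show ?thesis using cTy[OF y0U] m1 by simp
  qed
  have cA: "card (A i) = card (A 1)" if "i \<in> {1..m}" for i
  proof -
    have "inj_on (\<pi> ^^ (i - 1)) (A 1)" using pw_inj A1U inj_on_subset by blast
    then show ?thesis using Apw[OF that] card_image by metis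
  qed
  have dc: "m * \<kappa> = m * card (A 1)"
  proof -
    have "Sigma U T = (\<lambda>(i,y). (y,i)) ` (SIGMA i:{1..m}. A i)"
    proof
      show "Sigma U T \<subseteq> (\<lambda>(i,y). (y,i)) ` (SIGMA i:{1..m}. A i)"
      proof
        fix p assume "p \<in> Sigma U T"
        then obtain y i where p: "p = (y,i)" "y \<in> U" "i \<in> T y" by blast
        then have "(i,y) \<in> (SIGMA i:{1..m}. A i)" unfolding T_def by auto
        then show "p \<in> (\<lambda>(i,y). (y,i)) ` (SIGMA i:{1..m}. A i)" using p by force
      qed
      show "(\<lambda>(i,y). (y,i)) ` (SIGMA i:{1..m}. A i) \<subseteq> Sigma U T"
      proof
        fix p assume "p \<in> (\<lambda>(i,y). (y,i)) ` (SIGMA i:{1..m}. A i)"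
        then obtain q where q: "q \<in> Sigma {1..m} A" "p = (\<lambda>(i,y). (y,i)) q" by blast
        then obtain i y where "q = (i,y)" by (cases q)
        then have p: "p = (y,i)" "i \<in> {1..m}" "y \<in> A i" using q by auto
        then have "y \<in> U" using AU by blast
        then show "p \<in> Sigma U T" using p unfolding T_def by auto
      qed
    qed
    moreover have "inj_on (\<lambda>(i,y). (y,i)) (SIGMA i:{1..m}. A i)" unfolding inj_on_def by auto
    ultimately have "card (Sigma U T) = card (SIGMA i:{1..m}. A i)" by (simp add: card_image)
    moreover have "card (Sigma U T) = (\<Sum>y\<in>U. card (T y))" using finU finT by simp
    moreover have "card (SIGMA i:{1..m}. A i) = (\<Sum>i\<in>{1..m}. card (A i))"
    proof -
      have "\<forall>i\<in>{1..m}. finite (A i)" using AU finU by (meson finite_subset)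
      then show ?thesis by (subst card_SigmaI) auto
    qed
    moreover have "(\<Sum>y\<in>U. card (T y)) = m * \<kappa>" using cTy cardU by simp
    moreover have "(\<Sum>i\<in>{1..m}. card (A i)) = (\<Sum>i\<in>{1..m}. card (A 1))"
      by (rule sum.cong[OF refl cA])
    moreover have "(\<Sum>i\<in>{1..m}. card (A 1)) = m * card (A 1)" by simp
    ultimately show ?thesis by simp
  qed
  then have kA: "card (A 1) = \<kappa>" using m1 by simp
  consider "\<kappa> = 1" | "\<kappa> = m - 1" | "2 \<le> \<kappa> \<and> \<kappa> \<le> m - 2" using k1 km by linarith
  then show ?thesis
  proof cases
    case 1
    have "\<exists>\<sigma>. bij_betw \<sigma> U {1..m} \<and> (\<forall>i\<in>{1..m}. \<sigma> ` A i = {i})"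
    proof (rule iso1)
      show "\<forall>i\<in>{1..m}. A i \<subseteq> U" using AU by blast
      show "\<forall>y\<in>U. card {i\<in>{1..m}. y \<in> A i} = 1" using cTy 1 unfolding T_def by simp
      show "\<forall>i\<in>{1..m}. card (A i) = 1"
      proof
        fix i assume i: "i \<in> {1..m}"
        show "card (A i) = 1" using cA[OF i] kA 1 by simp
      qed
    qed
    then show ?thesis unfolding iso_sys_def by blast
  next
    case 2
    have "iso_sys U A {1..m} (compl_sys {1..m} (\<lambda>i. {i})) m"
    proof (rule iso1c)
      show "\<forall>i\<in>{1..m}. A i \<subseteq> U" using AU by blast
      show "\<forall>y\<in>U. card {i\<in>{1..m}. y \<notin> A i} = 1"
      proof
        fix y assume y: "y \<in> U"
        have "{i\<in>{1..m}. y \<notin> A i} = {1..m} - T y" unfolding T_def by auto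
        then have "card {i\<in>{1..m}. y \<notin> A i} = m - card (T y)"
          using card_Diff_subset[OF finT T_sub] by simp
        then show "card {i\<in>{1..m}. y \<notin> A i} = 1" using cTy[OF y] 2 m1 km k1 by simp
      qed
      show "\<forall>i\<in>{1..m}. card (U - A i) = 1"
      proof
        fix i assume i: "i \<in> {1..m}"
        have "card (U - A i) = card U - card (A i)"
          using card_Diff_subset[OF finite_subset[OF AU[OF i] finU] AU[OF i]] .
        then show "card (U - A i) = 1" using cardU cA[OF i] kA 2 m1 k1 km by simp
      qed
    qed
    then show ?thesis by simp
  next
    case 3
    then have False using contra[OF y0U h1 hm] unfolding \<kappa>_def by simp
    then show ?thesis ..
  qed
qed

end

lemma iso_explicit:
  assumes "bij_betw \<sigma> U V" "\<forall>i\<in>{1..m}. \<sigma> ` A i = B i"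
  shows "iso_sys U A V B m"
  unfolding iso_sys_def using assms by blast

lemma bij5:
  assumes U: "U = {a, b, c, d, e}" and s: "\<sigma> a = 1" "\<sigma> b = 5" "\<sigma> c = 4" "\<sigma> d = 2" "\<sigma> e = 3"
    and dist: "a \<noteq> b" "c \<noteq> d" "c \<noteq> e" "d \<noteq> e" "a \<noteq> c" "a \<noteq> d" "a \<noteq> e" "b \<noteq> c" "b \<noteq> d" "b \<noteq> e"
  shows "bij_betw \<sigma> U {1..(5::nat)}"
proof -
  have img: "\<sigma> ` U = {1..5}" unfolding U using s by (auto simp: eval_nat_numeral)
  have "card U = 5" unfolding U using dist by auto
  then have "card (\<sigma> ` U) = card U" using img by simp
  then have "inj_on \<sigma> U" by (rule eq_card_imp_inj_on[rotated]) (simp add: U)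
  then show ?thesis unfolding bij_betw_def using img by simp
qed

context perm_sys
begin

lemma m5_iso:
  fixes A :: "nat \<Rightarrow> 'a set"
  assumes cU: "card U \<le> 5" and Api: "\<forall>i\<in>{1..<5}. \<pi> ` A i = A (Suc i)" and A1U: "A 1 \<subseteq> U"
    and u: "u \<in> A 1" "\<pi> u \<notin> A 1" "per u = 2"
    and v: "v \<in> A 1" "\<pi> v \<notin> A 1" "per v = 3"
  shows "iso_sys U A {1..5::nat} (fam [{1,4}, {2,5}, {1,3}, {4,5}, {1,2}]) 5
       \<or> iso_sys U A {1..5::nat} (compl_sys {1..5} (fam [{1,4}, {2,5}, {1,3}, {4,5}, {1,2}])) 5"
proof -
  have uU: "u \<in> U" and vU: "v \<in> U" using u v A1U by auto
  define u1 where "u1 = \<pi> u"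
  define v1 where "v1 = \<pi> v"
  define v2 where "v2 = \<pi> v1"
  have u1U: "u1 \<in> U" unfolding u1_def using pi_in uU by blast
  have v1U: "v1 \<in> U" unfolding v1_def using pi_in vU by blast
  have v2U: "v2 \<in> U" unfolding v2_def using pi_in v1U by blast
  have pu1: "\<pi> u1 = u" using per_prop(2)[OF uU] u(3) unfolding u1_def by (simp add: numeral_2_eq_2)
  have pv2: "\<pi> v2 = v" using per_prop(2)[OF vU] v(3) unfolding v2_def v1_def by (simp add: numeral_3_eq_3)
  have "(\<pi> ^^ 1) u \<noteq> u" by (rule per_min) (use u in auto)
  then have d1: "u \<noteq> u1" unfolding u1_def by simp
  have "(\<pi> ^^ 1) v \<noteq> v" by (rule per_min) (use v in auto)
  then have d2: "v \<noteq> v1" unfolding v1_def by simp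
  have "(\<pi> ^^ 2) v \<noteq> v" by (rule per_min) (use v in auto)
  then have d3: "v \<noteq> v2" unfolding v2_def v1_def by (simp add: numeral_2_eq_2)
  have d4: "v1 \<noteq> v2"
  proof
    assume "v1 = v2"
    then have "\<pi> v = \<pi> v1" unfolding v1_def v2_def by simp
    then have "v = v1" using pi_inj vU v1U unfolding inj_on_def by blast
    then show False using d2 by simp
  qed
  have pers: "per u1 = 2" "per v1 = 3" "per v2 = 3"
    using per_pw[OF uU, of 1] per_pw[OF vU, of 1] per_pw[OF vU, of 2] u(3) v(3)
    unfolding u1_def v1_def v2_def by (simp_all add: numeral_2_eq_2)
  have dd: "u \<noteq> v" "u \<noteq> v1" "u \<noteq> v2" "u1 \<noteq> v" "u1 \<noteq> v1" "u1 \<noteq> v2"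
    using pers u(3) v(3) by (metis numeral_eq_iff semiring_norm(89))+
  have Ueq: "U = {u, u1, v, v1, v2}"
  proof -
    have sub: "{u, u1, v, v1, v2} \<subseteq> U" using uU u1U vU v1U v2U by auto
    have "card {u, u1, v, v1, v2} = 5" using d1 d2 d3 d4 dd by auto
    then show ?thesis using card_seteq[OF finU sub] cU by simp
  qed
  have cardU5: "card U = 5" unfolding Ueq using d1 d2 d3 d4 dd by auto
  have u1X: "u1 \<notin> A 1" "v1 \<notin> A 1" using u v unfolding u1_def v1_def by auto
  have A2: "A 2 = \<pi> ` A 1" using Api by (simp add: numeral_2_eq_2)
  have A3: "A 3 = \<pi> ` A 2" using Api by (simp add: numeral_3_eq_3 numeral_2_eq_2)
  have A4: "A 4 = \<pi> ` A 3" using Api[rule_format, of 3] by (simp add: numeral_3_eq_3 eval_nat_numeral)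
  have A5: "A 5 = \<pi> ` A 4" using Api[rule_format, of 4] by (simp add: eval_nat_numeral)
  show ?thesis
  proof (cases "v2 \<in> A 1")
    case False
    have X: "A 1 = {u, v}"
    proof
      show "A 1 \<subseteq> {u, v}"
      proof
        fix x assume x: "x \<in> A 1"
        then have "x \<in> U" using A1U by (rule subsetD[rotated])
        then have "x \<in> {u, u1, v, v1, v2}" by (simp only: Ueq)
        moreover have "x \<noteq> u1" "x \<noteq> v1" "x \<noteq> v2" using x u1X False by blast+
        ultimately show "x \<in> {u, v}" by simp
      qed
      show "{u, v} \<subseteq> A 1" using u(1) v(1) by blast
    qed
    define \<sigma> :: "'a \<Rightarrow> nat" where "\<sigma> y = (if y = u then 1 else if y = v then 4 else if y = v1 then 2 else if y = u1 then 5 else 3)" for y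
    have B1: "A 1 = {u, v}" by (rule X)
    have B2: "A 2 = {u1, v1}" using A2 B1 unfolding u1_def v1_def by simp
    have B3: "A 3 = {u, v2}" using A3 B2 pu1 unfolding v2_def by simp
    have B4: "A 4 = {u1, v}" using A4 B3 pv2 unfolding u1_def by simp
    have B5: "A 5 = {u, v1}" using A5 B4 pu1 unfolding v1_def by simp
    have s: "\<sigma> u = 1" "\<sigma> v = 4" "\<sigma> v1 = 2" "\<sigma> u1 = 5" "\<sigma> v2 = 3"
      unfolding \<sigma>_def using d1 d2 d3 d4 dd by auto
    have "bij_betw \<sigma> U {1..5}" by (rule bij5[OF Ueq s(1,4,2,3,5) d1 d2 d3 d4 dd])
    moreover have "\<forall>i\<in>{1..5}. \<sigma> ` A i = fam [{1,4}, {2,5}, {1,3}, {4,5}, {1,2}] i"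
    proof
      fix i :: nat assume "i \<in> {1..5}"
      then consider "i = 1" | "i = 2" | "i = 3" | "i = 4" | "i = 5" by fastforce
      then show "\<sigma> ` A i = fam [{1,4}, {2,5}, {1,3}, {4,5}, {1,2}] i"
      proof cases
        case 1
        have "\<sigma> ` A 1 = {1,4}" using B1 s by auto
        then show ?thesis using 1 by (simp add: fam_def)
      next
        case 2
        have "\<sigma> ` A 2 = {2,5}" using B2 s by auto
        then show ?thesis using 2 by (simp add: fam_def)
      next
        case 3
        have "\<sigma> ` A 3 = {1,3}" using B3 s by auto
        then show ?thesis using 3 by (simp add: fam_def)
      next
        case 4
        have "\<sigma> ` A 4 = {4,5}" using B4 s by auto
        then show ?thesis using 4 by (simp add: fam_def)
      next
        case 5
        have "\<sigma> ` A 5 = {1,2}" using B5 s by auto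
        then show ?thesis using 5 by (simp add: fam_def)
      qed
    qed
    ultimately have "iso_sys U A {1..5::nat} (fam [{1,4}, {2,5}, {1,3}, {4,5}, {1,2}]) 5" by (rule iso_explicit)
    then show ?thesis by (rule disjI1)
  next
    case True
    have X: "A 1 = {u, v, v2}"
    proof
      show "A 1 \<subseteq> {u, v, v2}"
      proof
        fix x assume x: "x \<in> A 1"
        then have "x \<in> U" using A1U by (rule subsetD[rotated])
        then have "x \<in> {u, u1, v, v1, v2}" by (simp only: Ueq)
        moreover have "x \<noteq> u1" "x \<noteq> v1" using x u1X by blast+
        ultimately show "x \<in> {u, v, v2}" by simp
      qed
      show "{u, v, v2} \<subseteq> A 1" using u(1) v(1) True by blast
    qed
    define \<sigma> :: "'a \<Rightarrow> nat" where "\<sigma> y = (if y = u1 then 1 else if y = v1 then 4 else if y = v2 then 2 else if y = u then 5 else 3)" for y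
    have B1: "A 1 = {u, v, v2}" by (rule X)
    have B2: "A 2 = {u1, v1, v}" using A2 B1 pv2 unfolding u1_def v1_def by simp
    have B3: "A 3 = {u, v2, v1}" using A3 B2 pu1 unfolding v2_def v1_def by simp
    have B4: "A 4 = {u1, v, v2}" using A4 B3 pv2 unfolding u1_def v2_def by simp
    have B5: "A 5 = {u, v1, v}" using A5 B4 pu1 pv2 unfolding v1_def by simp
    have s: "\<sigma> u1 = 1" "\<sigma> v1 = 4" "\<sigma> v2 = 2" "\<sigma> u = 5" "\<sigma> v = 3"
      unfolding \<sigma>_def using d1 d2 d3 d4 dd by auto
    have "\<sigma> ` U = {1..5}" unfolding Ueq using s by (auto simp: eval_nat_numeral)
    then have "bij_betw \<sigma> U {1..5}" using cardU5 finU unfolding bij_betw_def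
      by (metis eq_card_imp_inj_on card_atLeastAtMost diff_Suc_1)
    moreover have "\<forall>i\<in>{1..5}. \<sigma> ` A i = compl_sys {1..5} (fam [{1,4}, {2,5}, {1,3}, {4,5}, {1,2}]) i"
    proof
      fix i :: nat assume "i \<in> {1..5}"
      then consider "i = 1" | "i = 2" | "i = 3" | "i = 4" | "i = 5" by fastforce
      then show "\<sigma> ` A i = compl_sys {1..5} (fam [{1,4}, {2,5}, {1,3}, {4,5}, {1,2}]) i"
      proof cases
        case 1
        have "\<sigma> ` A 1 = {5,3,2}" using B1 s by simp
        then show ?thesis using 1 by (auto simp add: fam_def compl_sys_def)
      next
        case 2
        have "\<sigma> ` A 2 = {1,4,3}" using B2 s by simp
        then show ?thesis using 2 by (auto simp add: fam_def compl_sys_def)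
      next
        case 3
        have "\<sigma> ` A 3 = {5,2,4}" using B3 s by simp
        then show ?thesis using 3 by (auto simp add: fam_def compl_sys_def)
      next
        case 4
        have "\<sigma> ` A 4 = {1,3,2}" using B4 s by simp
        then show ?thesis using 4 by (auto simp add: fam_def compl_sys_def)
      next
        case 5
        have "\<sigma> ` A 5 = {5,4,3}" using B5 s by simp
        then show ?thesis using 5 by (auto simp add: fam_def compl_sys_def)
      qed
    qed
    ultimately have "iso_sys U A {1..5::nat} (compl_sys {1..5} (fam [{1,4}, {2,5}, {1,3}, {4,5}, {1,2}])) 5" by (rule iso_explicit)
    then show ?thesis by (rule disjI2)
  qed
qed

end

lemma bij_card:
  assumes "finite U" "card U = card V" "\<sigma> ` U = V"
  shows "bij_betw \<sigma> U V"
  using assms eq_card_imp_inj_on unfolding bij_betw_def by metis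

context perm_sys
begin

lemma Apw_gen:
  assumes Api: "\<forall>i\<in>{1..<m}. \<pi> ` A i = A (Suc i)"
  shows "i \<in> {1..m} \<Longrightarrow> A i = (\<pi> ^^ (i - 1)) ` A 1"
proof (induction i)
  case 0 then show ?case by simp
next
  case (Suc i)
  show ?case
  proof (cases "i = 0")
    case True then show ?thesis by simp
  next
    case False
    then have "A (Suc i) = \<pi> ` A i" using Api Suc.prems by auto
    also have "\<dots> = \<pi> ` ((\<pi> ^^ (i - 1)) ` A 1)" using Suc False by simp
    also have "\<dots> = (\<pi> ^^ Suc (i - 1)) ` A 1" by (simp add: image_comp)
    also have "Suc (i - 1) = i" using False by simp
    finally show ?thesis by simp
  qed
qed

lemma all_eq_of_inv:
  assumes Api: "\<forall>i\<in>{1..<m}. \<pi> ` A i = A (Suc i)" and inv: "\<pi> ` A 1 = A 1"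
  shows "\<forall>i\<in>{1..m}. \<forall>j\<in>{1..m}. A i = A j"
proof -
  have pw: "(\<pi> ^^ k) ` A 1 = A 1" for k
  proof (induction k)
    case 0 then show ?case by simp
  next
    case (Suc k)
    have "(\<pi> ^^ Suc k) ` A 1 = \<pi> ` ((\<pi> ^^ k) ` A 1)" by (simp add: image_comp)
    then show ?case using Suc inv by simp
  qed
  have h: "A i = A 1" if "i \<in> {1..m}" for i using Apw_gen[OF Api that] pw[of "i - 1"] by simp
  show ?thesis
  proof (intro ballI)
    fix i j assume "i \<in> {1..m}" "j \<in> {1..m}"
    then show "A i = A j" using h[of i] h[of j] by argo
  qed
qed

lemma small:
  fixes A :: "nat \<Rightarrow> 'a set"
  assumes Api: "\<forall>i\<in>{1..<m}. \<pi> ` A i = A (Suc i)" and AU: "\<forall>i\<in>{1..m}. A i \<subseteq> U"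
    and cU: "card U \<le> m" and m1: "1 \<le> m" and m3: "m \<le> 3"
  shows "(\<forall>i\<in>{1..m}. \<forall>j\<in>{1..m}. A i = A j)
    \<or> iso_sys U A {1..m} (\<lambda>i. {i}) m
    \<or> iso_sys U A {1..m} (compl_sys {1..m} (\<lambda>i. {i})) m
    \<or> (m = 3 \<and> (iso_sys U A {1..2::nat} (fam [{1}, {2}, {1}]) m
                \<or> iso_sys U A {1..3::nat} (fam [{1}, {2}, {1}]) m
                \<or> iso_sys U A {1..3::nat} (fam [{1,2}, {2,3}, {1,2}]) m))
    \<or> (m = 5 \<and> (iso_sys U A {1..5::nat} (fam [{1,4}, {2,5}, {1,3}, {4,5}, {1,2}]) m
                \<or> iso_sys U A {1..5::nat}
                    (compl_sys {1..5} (fam [{1,4}, {2,5}, {1,3}, {4,5}, {1,2}])) m))"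
proof (cases "\<pi> ` A 1 = A 1")
  case True
  then show ?thesis using all_eq_of_inv[OF Api] by blast
next
  case False
  have A1U: "A 1 \<subseteq> U" using AU m1 by auto
  have finA1: "finite (A 1)" using A1U finU finite_subset by blast
  have "\<exists>y\<in>A 1. \<pi> y \<notin> A 1"
  proof (rule ccontr)
    assume "\<not> (\<exists>y\<in>A 1. \<pi> y \<notin> A 1)"
    then have "\<pi> ` A 1 \<subseteq> A 1" by auto
    moreover have "inj_on \<pi> (A 1)" using pi_inj A1U inj_on_subset by blast
    ultimately have "\<pi> ` A 1 = A 1" using endo_inj_surj finA1 by blast
    then show False using False by simp
  qed
  then obtain y where y: "y \<in> A 1" "\<pi> y \<notin> A 1" by blast
  define y1 where "y1 = \<pi> y"
  define y2 where "y2 = \<pi> y1"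
  have yU: "y \<in> U" using y A1U by auto
  have y1U: "y1 \<in> U" unfolding y1_def using pi_in yU by blast
  have y2U: "y2 \<in> U" unfolding y2_def using pi_in y1U by blast
  have d01: "y \<noteq> y1" using y unfolding y1_def by auto
  have y1A: "y1 \<notin> A 1" using y unfolding y1_def by simp
  consider "m = 1" | "m = 2" | "m = 3" using m1 m3 by linarith
  then show ?thesis
  proof cases
    case 1
    then show ?thesis by auto
  next
    case 2
    have Ueq: "U = {y, y1}"
    proof -
      have sub: "{y, y1} \<subseteq> U" using yU y1U by auto
      have "card {y, y1} = 2" using d01 by simp
      then show ?thesis using card_seteq[OF finU sub] cU 2 by simp
    qed
    have B1: "A 1 = {y}" using A1U y(1) y1A unfolding Ueq by auto
    have B2: "A 2 = {y1}" using Api 2 B1 unfolding y1_def by (simp add: numeral_2_eq_2)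
    define \<sigma> :: "'a \<Rightarrow> nat" where "\<sigma> x = (if x = y then 1 else 2)" for x
    have s: "\<sigma> y = 1" "\<sigma> y1 = 2" unfolding \<sigma>_def using d01 by auto
    have "bij_betw \<sigma> U {1..m}"
      by (rule bij_card[OF finU]) (use Ueq s d01 2 in \<open>auto simp: eval_nat_numeral\<close>)
    moreover have "\<forall>i\<in>{1..m}. \<sigma> ` A i = {i}"
    proof
      fix i assume "i \<in> {1..m}"
      then consider "i = 1" | "i = 2" using 2 by fastforce
      then show "\<sigma> ` A i = {i}" by cases (use B1 B2 s in simp)+
    qed
    ultimately have "iso_sys U A {1..m} (\<lambda>i. {i}) m" by (rule iso_explicit)
    then show ?thesis by blast
  next
    case 3
    have B2: "A 2 = \<pi> ` A 1" using Api 3 by (simp add: numeral_2_eq_2)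
    have B3: "A 3 = \<pi> ` A 2" using Api 3 by (simp add: numeral_3_eq_3 numeral_2_eq_2)
    show ?thesis
    proof (cases "y2 = y")
      case True
      then have py1: "\<pi> y1 = y" unfolding y2_def by simp
      show ?thesis
      proof (cases "U = {y, y1}")
        case Ueq: True
        have C1: "A 1 = {y}" using A1U y(1) y1A unfolding Ueq by auto
        have C2: "A 2 = {y1}" using B2 C1 unfolding y1_def by simp
        have C3: "A 3 = {y}" using B3 C2 py1 by simp
        define \<sigma> :: "'a \<Rightarrow> nat" where "\<sigma> x = (if x = y then 1 else 2)" for x
        have s: "\<sigma> y = 1" "\<sigma> y1 = 2" unfolding \<sigma>_def using d01 by auto
        have "bij_betw \<sigma> U {1..2}"
          by (rule bij_card[OF finU]) (use Ueq s d01 in \<open>auto simp: eval_nat_numeral\<close>)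
        moreover have "\<forall>i\<in>{1..m}. \<sigma> ` A i = fam [{1}, {2}, {1}] i"
        proof
          fix i assume "i \<in> {1..m}"
          then consider "i = 1" | "i = 2" | "i = 3" using 3 by fastforce
          then show "\<sigma> ` A i = fam [{1}, {2}, {1}] i"
            by cases (use C1 C2 C3 s in \<open>simp_all add: fam_def\<close>)
        qed
        ultimately have "iso_sys U A {1..2::nat} (fam [{1}, {2}, {1}]) m" by (rule iso_explicit)
        then show ?thesis using 3 by blast
      next
        case Une: False
        obtain w where w: "w \<in> U" "w \<noteq> y" "w \<noteq> y1" using Une yU y1U by blast
        have Ueq: "U = {y, y1, w}"
        proof -
          have sub: "{y, y1, w} \<subseteq> U" using yU y1U w by auto
          have "card {y, y1, w} = 3" using d01 w by simp
          then show ?thesis using card_seteq[OF finU sub] cU 3 by simp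
        qed
        have pw: "\<pi> w = w"
        proof -
          have "\<pi> w \<in> U" using pi_in w by blast
          moreover have "\<pi> w \<noteq> y" using py1 pi_inj w y1U unfolding inj_on_def by metis
          moreover have "\<pi> w \<noteq> y1" using pi_inj w yU unfolding inj_on_def y1_def by metis
          ultimately show ?thesis unfolding Ueq by auto
        qed
        show ?thesis
        proof (cases "w \<in> A 1")
          case False
          have C1: "A 1 = {y}" using A1U y(1) y1A False unfolding Ueq by auto
          have C2: "A 2 = {y1}" using B2 C1 unfolding y1_def by simp
          have C3: "A 3 = {y}" using B3 C2 py1 by simp
          define \<sigma> :: "'a \<Rightarrow> nat" where "\<sigma> x = (if x = y then 1 else if x = y1 then 2 else 3)" for x
          have s: "\<sigma> y = 1" "\<sigma> y1 = 2" "\<sigma> w = 3" unfolding \<sigma>_def using d01 w by auto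
          have "bij_betw \<sigma> U {1..3}"
            by (rule bij_card[OF finU]) (use Ueq s d01 w in \<open>auto simp: eval_nat_numeral\<close>)
          moreover have "\<forall>i\<in>{1..m}. \<sigma> ` A i = fam [{1}, {2}, {1}] i"
          proof
            fix i assume "i \<in> {1..m}"
            then consider "i = 1" | "i = 2" | "i = 3" using 3 by fastforce
            then show "\<sigma> ` A i = fam [{1}, {2}, {1}] i"
              by cases (use C1 C2 C3 s in \<open>simp_all add: fam_def\<close>)
          qed
          ultimately have "iso_sys U A {1..3::nat} (fam [{1}, {2}, {1}]) m" by (rule iso_explicit)
          then show ?thesis using 3 by blast
        next
          case True
          have C1: "A 1 = {y, w}" using A1U y(1) y1A True unfolding Ueq by auto
          have C2: "A 2 = {y1, w}" using B2 C1 pw unfolding y1_def by simp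
          have C3: "A 3 = {y, w}" using B3 C2 py1 pw by simp
          define \<sigma> :: "'a \<Rightarrow> nat" where "\<sigma> x = (if x = y then 1 else if x = w then 2 else 3)" for x
          have s: "\<sigma> y = 1" "\<sigma> w = 2" "\<sigma> y1 = 3" unfolding \<sigma>_def using d01 w by auto
          have "bij_betw \<sigma> U {1..3}"
            by (rule bij_card[OF finU]) (use Ueq s d01 w in \<open>auto simp: eval_nat_numeral\<close>)
          moreover have "\<forall>i\<in>{1..m}. \<sigma> ` A i = fam [{1,2}, {2,3}, {1,2}] i"
          proof
            fix i assume "i \<in> {1..m}"
            then consider "i = 1" | "i = 2" | "i = 3" using 3 by fastforce
            then show "\<sigma> ` A i = fam [{1,2}, {2,3}, {1,2}] i"
              by cases (use C1 C2 C3 s in \<open>auto simp add: fam_def\<close>)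
          qed
          ultimately have "iso_sys U A {1..3::nat} (fam [{1,2}, {2,3}, {1,2}]) m" by (rule iso_explicit)
          then show ?thesis using 3 by blast
        qed
      qed
    next
      case False
      have d12: "y1 \<noteq> y2"
      proof
        assume "y1 = y2"
        then have "\<pi> y = \<pi> y1" unfolding y1_def y2_def by simp
        then have "y = y1" using pi_inj yU y1U unfolding inj_on_def by blast
        then show False using d01 by simp
      qed
      have d02: "y \<noteq> y2" using False by simp
      have Ueq: "U = {y, y1, y2}"
      proof -
        have sub: "{y, y1, y2} \<subseteq> U" using yU y1U y2U by auto
        have "card {y, y1, y2} = 3" using d01 d12 d02 by simp
        then show ?thesis using card_seteq[OF finU sub] cU 3 by simp
      qed
      have py2: "\<pi> y2 = y"
      proof -
        have "\<pi> y2 \<in> U" using pi_in y2U by blast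
        moreover have "\<pi> y2 \<noteq> y1" using pi_inj y2U yU d02 unfolding inj_on_def y1_def by metis
        moreover have "\<pi> y2 \<noteq> y2" using pi_inj y2U y1U d12 unfolding inj_on_def y2_def by metis
        ultimately show ?thesis unfolding Ueq by auto
      qed
      show ?thesis
      proof (cases "y2 \<in> A 1")
        case False
        have C1: "A 1 = {y}" using A1U y(1) y1A False unfolding Ueq by auto
        have C2: "A 2 = {y1}" using B2 C1 unfolding y1_def by simp
        have C3: "A 3 = {y2}" using B3 C2 unfolding y2_def by simp
        define \<sigma> :: "'a \<Rightarrow> nat" where "\<sigma> x = (if x = y then 1 else if x = y1 then 2 else 3)" for x
        have s: "\<sigma> y = 1" "\<sigma> y1 = 2" "\<sigma> y2 = 3" unfolding \<sigma>_def using d01 d12 d02 by auto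
        have "bij_betw \<sigma> U {1..m}"
          by (rule bij_card[OF finU]) (use Ueq s d01 d12 d02 3 in \<open>auto simp: eval_nat_numeral\<close>)
        moreover have "\<forall>i\<in>{1..m}. \<sigma> ` A i = {i}"
        proof
          fix i assume "i \<in> {1..m}"
          then consider "i = 1" | "i = 2" | "i = 3" using 3 by fastforce
          then show "\<sigma> ` A i = {i}" by cases (use C1 C2 C3 s in simp)+
        qed
        ultimately have "iso_sys U A {1..m} (\<lambda>i. {i}) m" by (rule iso_explicit)
        then show ?thesis by blast
      next
        case True
        have C1: "A 1 = {y, y2}" using A1U y(1) y1A True unfolding Ueq by auto
        have C2: "A 2 = {y1, y}" using B2 C1 py2 unfolding y1_def by simp
        have C3: "A 3 = {y2, y1}" using B3 C2 unfolding y2_def y1_def by simp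
        define \<sigma> :: "'a \<Rightarrow> nat" where "\<sigma> x = (if x = y1 then 1 else if x = y2 then 2 else 3)" for x
        have s: "\<sigma> y1 = 1" "\<sigma> y2 = 2" "\<sigma> y = 3" unfolding \<sigma>_def using d01 d12 d02 by auto
        have "bij_betw \<sigma> U {1..m}"
          by (rule bij_card[OF finU]) (use Ueq s d01 d12 d02 3 in \<open>auto simp: eval_nat_numeral\<close>)
        moreover have "\<forall>i\<in>{1..m}. \<sigma> ` A i = compl_sys {1..m} (\<lambda>i. {i}) i"
        proof
          fix i assume "i \<in> {1..m}"
          then consider "i = 1" | "i = 2" | "i = 3" using 3 by fastforce
          then show "\<sigma> ` A i = compl_sys {1..m} (\<lambda>i. {i}) i"
            by cases (use C1 C2 C3 s 3 in \<open>auto simp: compl_sys_def\<close>)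
        qed
        ultimately have "iso_sys U A {1..m} (compl_sys {1..m} (\<lambda>i. {i})) m" by (rule iso_explicit)
        then show ?thesis by blast
      qed
    qed
  qed
qed

end

context perm_X
begin

lemma pair_cond:
  fixes A :: "nat \<Rightarrow> 'a set"
  assumes harm: "harmonic U m A" and Api: "\<forall>i\<in>{1..<m}. \<pi> ` A i = A (Suc i)"
    and AU: "\<forall>i\<in>{1..m}. A i \<subseteq> U" and XA: "X = A 1" and m3: "3 \<le> m"
  shows "\<forall>d. 2 \<le> d \<longrightarrow> d \<le> m - 1 \<longrightarrow> f d = f 2"
proof -
  have fd: "f d = card X - card (HI U A {1, Suc d})" if d: "2 \<le> d" "d \<le> m - 1" for d
  proof -
    have Ad: "A (Suc d) = (\<pi> ^^ d) ` X" using Apw_gen[OF Api, of "Suc d"] d m3 XA by simp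
    have HIeq: "HI U A {1, Suc d} = X \<inter> (\<pi> ^^ d) ` X"
      unfolding HI_def using Ad XA XU by auto
    have "(\<pi> ^^ d) ` {y\<in>X. (\<pi> ^^ d) y \<in> X} = X \<inter> (\<pi> ^^ d) ` X" by auto
    moreover have "inj_on (\<pi> ^^ d) {y\<in>X. (\<pi> ^^ d) y \<in> X}"
      using pw_inj XU inj_on_subset by (metis (no_types, lifting) mem_Collect_eq subsetI)
    ultimately have c1: "card (X \<inter> (\<pi> ^^ d) ` X) = card {y\<in>X. (\<pi> ^^ d) y \<in> X}"
      by (metis card_image)
    have "card X = card ({y\<in>X. (\<pi> ^^ d) y \<in> X} \<union> {y\<in>X. (\<pi> ^^ d) y \<notin> X})"
      by (rule arg_cong[where f=card]) auto
    also have "\<dots> = card {y\<in>X. (\<pi> ^^ d) y \<in> X} + card {y\<in>X. (\<pi> ^^ d) y \<notin> X}"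
      by (rule card_Un_disjoint) (use finX in auto)
    finally have "card {y\<in>X. (\<pi> ^^ d) y \<in> X} + card {y\<in>X. (\<pi> ^^ d) y \<notin> X} = card X" by simp
    then show ?thesis unfolding f_def HIeq c1 by simp
  qed
  have rd: "run_decomp {1, Suc d} = run_decomp {1, 3::nat}" if d: "2 \<le> d" for d
  proof -
    have "{1, Suc d} = {1} \<union> {Suc d}" by auto
    then have "run_decomp {1, Suc d} = run_decomp ({1} \<union> {Suc d})" by (rule arg_cong)
    also have "\<dots> = run_decomp {1} + run_decomp {Suc d}"
      by (rule run_decomp_union) (use d in \<open>auto simp: sep_def\<close>)
    also have "run_decomp {Suc d} = {#1#}" by (rule run_decomp_single) simp
    also have "{#1#} = run_decomp {3::nat}" by (rule run_decomp_single[symmetric]) simp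
    also have "run_decomp {1} + run_decomp {3::nat} = run_decomp ({1} \<union> {3})"
      by (rule run_decomp_union[symmetric]) (auto simp: sep_def)
    also have "{1} \<union> {3::nat} = {1, 3}" by auto
    finally show ?thesis .
  qed
  show ?thesis
  proof (intro allI impI)
    fix d :: nat assume d: "2 \<le> d" "d \<le> m - 1"
    have s1: "{1, Suc d} \<subseteq> {1..m}" using d m3 by auto
    have s2: "{1, 3} \<subseteq> {1..m}" using m3 by auto
    have "card (HI U A {1, Suc d}) = card (HI U A {1, 3})"
      using harm s1 s2 rd[OF d(1)] unfolding harmonic_def by blast
    moreover have "f 2 = card X - card (HI U A {1, Suc 2})" by (rule fd) (use m3 in auto)
    ultimately show "f d = f 2" using fd[OF d] by (simp add: numeral_3_eq_3 numeral_2_eq_2)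
  qed
qed

end

theorem lemma5p7:
  fixes U :: "'a set" and A :: "nat \<Rightarrow> 'a set" and m :: nat
  assumes "set_system U m A"
    and "harmonic U m A"
    and "card U \<le> m"
  shows "(\<forall>i\<in>{1..m}. \<forall>j\<in>{1..m}. A i = A j)
    \<or> iso_sys U A {1..m} (\<lambda>i. {i}) m
    \<or> iso_sys U A {1..m} (compl_sys {1..m} (\<lambda>i. {i})) m
    \<or> (m = 3 \<and> (iso_sys U A {1..2::nat} (fam [{1}, {2}, {1}]) m
                \<or> iso_sys U A {1..3::nat} (fam [{1}, {2}, {1}]) m
                \<or> iso_sys U A {1..3::nat} (fam [{1,2}, {2,3}, {1,2}]) m))
    \<or> (m = 5 \<and> (iso_sys U A {1..5::nat} (fam [{1,4}, {2,5}, {1,3}, {4,5}, {1,2}]) m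
                \<or> iso_sys U A {1..5::nat}
                    (compl_sys {1..5} (fam [{1,4}, {2,5}, {1,3}, {4,5}, {1,2}])) m))"
proof (cases "m = 0")
  case True
  then show ?thesis by simp
next
  case False
  then have m1: "1 \<le> m" by simp
  have finU: "finite U" and AU: "\<forall>i\<in>{1..m}. A i \<subseteq> U" using assms(1) unfolding set_system_def by auto
  obtain \<pi> where bij: "bij_betw \<pi> U U" and Api: "\<forall>i\<in>{1..<m}. \<pi> ` A i = A (Suc i)"
    using exists_pi[OF assms(1,2)] by blast
  interpret P: perm_sys U \<pi> using finU bij by unfold_locales
  show ?thesis
  proof (cases "m \<le> 3")
    case True
    show ?thesis by (rule P.small[OF Api AU assms(3) m1 True])
  next
    case False
    then have m4: "4 \<le> m" by simp
    have A1U: "A 1 \<subseteq> U" using AU m1 by auto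
    interpret X: perm_X U \<pi> "A 1" using A1U by unfold_locales
    have pair: "\<forall>d. 2 \<le> d \<longrightarrow> d \<le> m - 1 \<longrightarrow> X.f d = X.f 2"
      by (rule X.pair_cond[OF assms(2) Api AU refl]) (use m4 in simp)
    have gen: "\<pi> ` A 1 = A 1 \<or> (\<exists>u\<in>U. P.per u = m \<and> P.orb u = U) \<or>
      (m = 5 \<and> (\<exists>u v. u \<in> A 1 \<and> v \<in> A 1 \<and> \<pi> u \<notin> A 1 \<and> \<pi> v \<notin> A 1 \<and> P.per u = 2 \<and> P.per v = 3))"
      by (rule X.generic[OF m4 assms(3) pair])
    then consider "\<pi> ` A 1 = A 1" | "\<exists>u\<in>U. P.per u = m \<and> P.orb u = U" |
      "m = 5 \<and> (\<exists>u v. u \<in> A 1 \<and> v \<in> A 1 \<and> \<pi> u \<notin> A 1 \<and> \<pi> v \<notin> A 1 \<and> P.per u = 2 \<and> P.per v = 3)"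
      by blast
    then show ?thesis
    proof cases
      case 1
      then show ?thesis using P.all_eq_of_inv[OF Api] by blast
    next
      case 2
      then obtain u where u: "u \<in> U" "P.per u = m" "P.orb u = U" by blast
      interpret S: sorb U \<pi> A m u
        using assms(1,2) Api m1 u by unfold_locales
      show ?thesis using S.single_main by blast
    next
      case 3
      then obtain u v where m5: "m = 5" and uv: "u \<in> A 1" "v \<in> A 1" "\<pi> u \<notin> A 1" "\<pi> v \<notin> A 1"
        "P.per u = 2" "P.per v = 3" by blast
      have "iso_sys U A {1..5::nat} (fam [{1,4}, {2,5}, {1,3}, {4,5}, {1,2}]) 5
       \<or> iso_sys U A {1..5::nat} (compl_sys {1..5} (fam [{1,4}, {2,5}, {1,3}, {4,5}, {1,2}])) 5"
        by (rule P.m5_iso) (use assms(3) Api A1U uv m5 in auto)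
      then show ?thesis using m5 by blast
    qed
  qed
qed

end
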